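(* Consider the dynamic trial-offer market with social influence under the quality ranking with $n\ge2$ products, visibilities $v_1\ge v_2\ge\cdots\ge v_n>0$, initial appeals $A_1,\dots,A_n>0$ and qualities $1\ge q_1>q_2>\cdots>q_n\ge 0$. Then almost surely $\frac{d_{1,t}}{\sum_{j=1}^n d_{j,t}}\to1$ as $t\to\infty$, i.e. the market converges almost surely to a monopoly for product 1 (the product of highest quality).
   Context: Dynamic trial-offer market with social influence under the quality ranking: product $i$ is permanently displayed in position $i$ with visibility $v_i$. Let $d_{i,t}$ be the number of purchases of product $i$ before step $t$ ($d_{i,1}=0$) and $a_{i,t}=A_i+d_{i,t}$. At step $t$ one participant tries product $i$ with probability $\frac{v_i a_{i,t}}{\sum_j v_j a_{j,t}}$, then purchases it with probability $q_i$ (independently); if purchased, $d_{i,t+1}=d_{i,t}+1$, all other counts unchanged. The market share of product $i$ at step $t$ is $d_{i,t}/\sum_j d_{j,t}$. *)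

theory Defs
  imports "HOL-Probability.Probability"
begin

text \<open>A market state d assigns to each product
its number of purchases so far. The randomness of one step is encoded by two
numbers u, w in [0,1] (to be drawn independently and uniformly): u selects the
product to be tried (inverse-CDF sampling with the trial probabilities
v_i a_i / (sum_j v_j a_j)), and the tried product i is purchased iff w < q_i.\<close>

definition weight_total :: "nat \<Rightarrow> (nat \<Rightarrow> real) \<Rightarrow> (nat \<Rightarrow> real) \<Rightarrow> (nat \<Rightarrow> nat) \<Rightarrow> real" where
  "weight_total n v A d = (\<Sum>j\<in>{1..n}. v j * (A j + real (d j)))"

definition cum_try_prob :: "nat \<Rightarrow> (nat \<Rightarrow> real) \<Rightarrow> (nat \<Rightarrow> real) \<Rightarrow> (nat \<Rightarrow> nat) \<Rightarrow> nat \<Rightarrow> real" where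
  "cum_try_prob n v A d i = (\<Sum>j\<in>{1..i}. v j * (A j + real (d j))) / weight_total n v A d"

definition tried_product :: "nat \<Rightarrow> (nat \<Rightarrow> real) \<Rightarrow> (nat \<Rightarrow> real) \<Rightarrow> (nat \<Rightarrow> nat) \<Rightarrow> real \<Rightarrow> nat" where
  "tried_product n v A d u =
     (if \<exists>i\<in>{1..n}. u < cum_try_prob n v A d i
      then (LEAST i. 1 \<le> i \<and> i \<le> n \<and> u < cum_try_prob n v A d i)
      else n)"

definition market_step :: "nat \<Rightarrow> (nat \<Rightarrow> real) \<Rightarrow> (nat \<Rightarrow> real) \<Rightarrow> (nat \<Rightarrow> real) \<Rightarrow>
    (nat \<Rightarrow> nat) \<Rightarrow> real \<Rightarrow> real \<Rightarrow> (nat \<Rightarrow> nat)" where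
  "market_step n v A q d u w =
     (let i = tried_product n v A d u in if w < q i then d(i := Suc (d i)) else d)"

text \<open>market_traj n v A q xs t is the purchase vector d_{.,t+1}
(so index 0 is the initial state d_{.,1} = 0), driven by the random inputs xs t True
(trial choice) and xs t False (purchase decision) of step t.\<close>

primrec market_traj :: "nat \<Rightarrow> (nat \<Rightarrow> real) \<Rightarrow> (nat \<Rightarrow> real) \<Rightarrow> (nat \<Rightarrow> real) \<Rightarrow>
    (nat \<Rightarrow> bool \<Rightarrow> real) \<Rightarrow> nat \<Rightarrow> (nat \<Rightarrow> nat)" where
  "market_traj n v A q xs 0 = (\<lambda>_. 0)"
| "market_traj n v A q xs (Suc t) =
     market_step n v A q (market_traj n v A q xs t) (xs t True) (xs t False)"

definition market_share :: "nat \<Rightarrow> (nat \<Rightarrow> nat) \<Rightarrow> nat \<Rightarrow> real" where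
  "market_share n d i = real (d i) / (\<Sum>j\<in>{1..n}. real (d j))"

end

theory Submission
  imports Defs
begin


locale mparams =
  fixes n :: nat and v A q :: "nat \<Rightarrow> real"
  assumes n2: "n \<ge> 2"
    and v_mono: "\<And>i j. 1 \<le> i \<Longrightarrow> i \<le> j \<Longrightarrow> j \<le> n \<Longrightarrow> v j \<le> v i"
    and v_pos: "v n > 0"
    and A_pos: "\<And>i. 1 \<le> i \<Longrightarrow> i \<le> n \<Longrightarrow> A i > 0"
    and q1: "q 1 \<le> 1"
    and q_strict: "\<And>i j. 1 \<le> i \<Longrightarrow> i < j \<Longrightarrow> j \<le> n \<Longrightarrow> q j < q i"
    and qn: "q n \<ge> 0"
begin

definition wt :: "(nat \<Rightarrow> nat) \<Rightarrow> nat \<Rightarrow> real" where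
  "wt d j = v j * (A j + real (d j))"

lemma vpos: "1 \<le> j \<Longrightarrow> j \<le> n \<Longrightarrow> v j > 0"
  using v_mono[of j n] v_pos by auto

lemma wt_pos: "1 \<le> j \<Longrightarrow> j \<le> n \<Longrightarrow> wt d j > 0"
  unfolding wt_def using vpos A_pos by (intro mult_pos_pos) (auto simp add: add_pos_nonneg)

lemma q_range: "1 \<le> j \<Longrightarrow> j \<le> n \<Longrightarrow> 0 \<le> q j \<and> q j \<le> 1"
proof -
  assume j: "1 \<le> j" "j \<le> n"
  have "q n \<le> q j" using q_strict[of j n] j by (cases "j = n") auto
  moreover have "q j \<le> q 1" using q_strict[of 1 j] j by (cases "j = 1") auto
  ultimately show ?thesis using qn q1 by auto
qed

lemma W_eq: "weight_total n v A d = (\<Sum>j\<in>{1..n}. wt d j)"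
  unfolding weight_total_def wt_def by simp

lemma W_pos: "weight_total n v A d > 0"
  unfolding W_eq using n2 by (intro sum_pos) (auto intro: wt_pos)

abbreviation "cum d i \<equiv> cum_try_prob n v A d i"

lemma cum_eq: "cum d i = (\<Sum>j\<in>{1..i}. wt d j) / weight_total n v A d"
  unfolding cum_try_prob_def wt_def by simp

lemma cum_0: "cum d 0 = 0" by (simp add: cum_eq)
lemma cum_n: "cum d n = 1" using W_pos[of d] by (simp add: cum_eq W_eq)

lemma cum_Suc: "cum d (Suc i) = cum d i + wt d (Suc i) / weight_total n v A d"
  by (simp add: cum_eq add_divide_distrib)

lemma cum_strict: "i < j \<Longrightarrow> j \<le> n \<Longrightarrow> cum d i < cum d j"
proof (induction j)
  case 0 then show ?case by simp
next
  case (Suc j)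
  have "wt d (Suc j) / weight_total n v A d > 0"
    using Suc.prems wt_pos[of "Suc j" d] W_pos[of d] by auto
  then have "cum d j < cum d (Suc j)" by (simp add: cum_Suc)
  with Suc show ?case by (cases "i = j") auto
qed

lemma cum_mono: "i \<le> j \<Longrightarrow> j \<le> n \<Longrightarrow> cum d i \<le> cum d j"
  using cum_strict[of i j d] by (cases "i = j") auto

definition cond :: "(nat \<Rightarrow> nat) \<Rightarrow> real \<Rightarrow> nat \<Rightarrow> bool" where
  "cond d u i \<longleftrightarrow> (1 < i \<longrightarrow> cum d (i - 1) \<le> u) \<and> (i < n \<longrightarrow> u < cum d i)"

abbreviation "tried d u \<equiv> tried_product n v A d u"

lemma tried_cond: "tried d u \<in> {1..n} \<and> cond d u (tried d u)"
proof (cases "\<exists>i\<in>{1..n}. u < cum d i")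
  case True
  let ?P = "\<lambda>i. 1 \<le> i \<and> i \<le> n \<and> u < cum d i"
  from True obtain i where i: "?P i" by auto
  have L: "?P (LEAST i. ?P i)" by (rule LeastI[of ?P i]) (rule i)
  have notP: "\<not> ?P j" if "j < (LEAST i. ?P i)" for j using not_less_Least[OF that] .
  have "tried d u = (LEAST i. ?P i)" unfolding tried_product_def using True by simp
  moreover have "cond d u (LEAST i. ?P i)"
    unfolding cond_def
  proof (intro conjI impI)
    assume "1 < (LEAST i. ?P i)"
    then have "\<not> ?P ((LEAST i. ?P i) - 1)" by (intro notP) auto
    then show "cum d ((LEAST i. ?P i) - 1) \<le> u" using L \<open>1 < _\<close> by auto
  qed (use L in auto)
  ultimately show ?thesis using L by auto
next
  case False
  have "tried d u = n" unfolding tried_product_def using False by simp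
  moreover have "n - 1 \<in> {1..n}" using n2 by auto
  then have "cum d (n - 1) \<le> u" using False by (meson not_le)
  ultimately show ?thesis using n2 by (auto simp: cond_def)
qed

lemma cond_unique: "i \<in> {1..n} \<Longrightarrow> j \<in> {1..n} \<Longrightarrow> cond d u i \<Longrightarrow> cond d u j \<Longrightarrow> i = j"
proof (rule ccontr)
  have *: "False" if "i \<in> {1..n}" "j \<in> {1..n}" "cond d u i" "cond d u j" "i < j" for i j
  proof -
    have "cum d (j - 1) \<le> u" using that by (auto simp: cond_def)
    moreover have "u < cum d i" using that by (auto simp: cond_def)
    moreover have "cum d i \<le> cum d (j - 1)" using that by (intro cum_mono) auto
    ultimately show False by auto
  qed
  assume "i \<in> {1..n}" "j \<in> {1..n}" "cond d u i" "cond d u j" "i \<noteq> j"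
  then show False using *[of i j] *[of j i] by (cases "i < j") auto
qed

lemma tried_eq_iff: "i \<in> {1..n} \<Longrightarrow> tried d u = i \<longleftrightarrow> cond d u i"
  using tried_cond[of d u] cond_unique[of i "tried d u" d u] by auto

lemma tried_set_Icc: "i \<in> {1..n} \<Longrightarrow> {0..1} \<inter> {u. tried d u = i} =
   (if i < n then {cum d (i - 1)..<cum d i} else {cum d (n - 1)..1})"
proof -
  assume i: "i \<in> {1..n}"
  have c0: "0 \<le> cum d (i - 1)" using cum_mono[of 0 "i - 1" d] i by (auto simp: cum_0)
  have c1: "cum d i \<le> 1" using cum_mono[of i n d] i by (simp add: cum_n)
  show ?thesis
    using i c0 c1 cum_0[of d] by (auto simp: tried_eq_iff cond_def)
qed

lemma tried_meas[measurable]: "(\<lambda>u. tried d u) \<in> measurable borel (count_space {1..n})"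
proof (subst measurable_count_space_eq2, simp, intro conjI ballI)
  show "(\<lambda>u. tried d u) \<in> space borel \<rightarrow> {1..n}" using tried_cond by auto
  fix i assume i: "i \<in> {1..n}"
  have "(\<lambda>u. tried d u) -` {i} \<inter> space borel = {u. cond d u i}"
    using tried_eq_iff[OF i] by auto
  also have "\<dots> \<in> sets borel" unfolding cond_def by measurable
  finally show "(\<lambda>u. tried d u) -` {i} \<inter> space borel \<in> sets borel" .
qed

lemma tried_prob:
  assumes i: "i \<in> {1..n}"
  shows "emeasure (uniform_measure lborel {0..1::real}) {u. tried d u = i} = ennreal (wt d i / weight_total n v A d)"
proof -
  have S: "{u. tried d u = i} \<in> sets borel"
    using measurable_sets[OF tried_meas, of "{i}" d] i by (simp add: vimage_def)
  have c0: "0 \<le> cum d (i - 1)" using cum_mono[of 0 "i - 1" d] i by (auto simp: cum_0)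
  have c1: "cum d (i - 1) \<le> cum d i" using cum_mono[of "i-1" i d] i by simp
  have diff: "cum d i - cum d (i - 1) = wt d i / weight_total n v A d"
    using cum_Suc[of d "i - 1"] i by simp
  have "emeasure (uniform_measure lborel {0..1::real}) {u. tried d u = i}
      = emeasure lborel ({0..1} \<inter> {u. tried d u = i})"
    using S by (simp add: divide_ennreal_def)
  also have "\<dots> = ennreal (cum d i - cum d (i - 1))"
    using tried_set_Icc[OF i, of d] c1 cum_n[of d] i by (auto simp: cum_n)
  also have "\<dots> = ennreal (wt d i / weight_total n v A d)"
    by (rule arg_cong[where f=ennreal]) (rule diff)
  finally show ?thesis .
qed


definition Sn :: "(nat \<Rightarrow> nat) set" where
  "Sn = {d. \<forall>j. (j = 0 \<or> n < j) \<longrightarrow> d j = 0}"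

lemma countable_Sn: "countable Sn"
proof -
  have "Sn \<subseteq> range (\<lambda>xs::nat list. \<lambda>j. if 1 \<le> j \<and> j \<le> n then xs ! (j - 1) else 0)" (is "_ \<subseteq> ?R")
  proof
    fix d assume d: "d \<in> Sn"
    have "d = (\<lambda>j. if 1 \<le> j \<and> j \<le> n then map d [1..<n+1] ! (j - 1) else 0)"
    proof
      fix j show "d j = (if 1 \<le> j \<and> j \<le> n then map d [1..<n+1] ! (j - 1) else 0)"
      proof (cases "1 \<le> j \<and> j \<le> n")
        case True
        then show ?thesis by (subst nth_map) (auto simp del: upt_Suc)
      next
        case False
        then have "j = 0 \<or> n < j" by auto
        then show ?thesis using d False unfolding Sn_def by auto
      qed
    qed
    then show "d \<in> ?R" by blast
  qed
  then show ?thesis by (rule countable_subset) simp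
qed

lemma zero_Sn: "(\<lambda>_. 0) \<in> Sn" by (simp add: Sn_def)

abbreviation "upd d i \<equiv> d(i := Suc (d i))"

lemma upd_Sn: "d \<in> Sn \<Longrightarrow> i \<in> {1..n} \<Longrightarrow> upd d i \<in> Sn"
  by (auto simp: Sn_def)

abbreviation "mstep d u w \<equiv> market_step n v A q d u w"

lemma mstep_eq: "mstep d u w = (if w < q (tried d u) then upd d (tried d u) else d)"
  by (simp add: market_step_def Let_def)

lemma mstep_Sn: "d \<in> Sn \<Longrightarrow> mstep d u w \<in> Sn"
  using tried_cond[of d u] by (simp add: mstep_eq upd_Sn)

lemma mstep_meas: "d \<in> Sn \<Longrightarrow> (\<lambda>x. mstep d (fst x) (snd x)) \<in> measurable (borel \<Otimes>\<^sub>M borel) (count_space Sn)"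
proof -
  assume d: "d \<in> Sn"
  have "(\<lambda>x. (\<lambda>i x. if snd x < q i then upd d i else d) (tried d (fst x)) x) \<in> measurable (borel \<Otimes>\<^sub>M borel) (count_space Sn)"
  proof (rule measurable_compose_countable'[where I="{1..n}" and f="\<lambda>i x. if snd x < q i then upd d i else d" and g="\<lambda>x. tried d (fst x)"])
    fix i assume i: "i \<in> {1..n}"
    show "(\<lambda>x. if snd x < q i then upd d i else d) \<in> measurable (borel \<Otimes>\<^sub>M borel) (count_space Sn)"
      apply (rule measurable_If)
        apply (rule measurable_const) using upd_Sn[OF d i] apply simp
       apply (rule measurable_const) using d apply simp
      apply measurable
      done
  next
    show "(\<lambda>x. tried d (fst x)) \<in> measurable (borel \<Otimes>\<^sub>M borel) (count_space {1..n})"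
      by measurable
  qed simp
  then show ?thesis by (simp add: mstep_eq)
qed

abbreviation "U \<equiv> uniform_measure lborel {0..1::real}"

lemma U_prob: "prob_space U"
  by (rule prob_space_uniform_measure) auto

lemma U_less: "0 \<le> c \<Longrightarrow> c \<le> 1 \<Longrightarrow> emeasure U {w. w < c} = ennreal c"
proof -
  assume c: "0 \<le> c" "c \<le> 1"
  have "{0..1} \<inter> {w::real. w < c} = {0..<c}" using c by auto
  then show ?thesis using c by (simp add: divide_ennreal_def)
qed

lemma U_ge: "0 \<le> c \<Longrightarrow> c \<le> 1 \<Longrightarrow> emeasure U {w. \<not> w < c} = ennreal (1 - c)"
proof -
  assume c: "0 \<le> c" "c \<le> 1"
  have "{0..1} \<inter> {w::real. \<not> w < c} = {c..1}" using c by auto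
  then show ?thesis using c by (simp add: divide_ennreal_def)
qed

definition Pop :: "((nat \<Rightarrow> nat) \<Rightarrow> ennreal) \<Rightarrow> (nat \<Rightarrow> nat) \<Rightarrow> ennreal" where
  "Pop f d = (\<Sum>i\<in>{1..n}. ennreal (wt d i / weight_total n v A d) *
       (ennreal (q i) * f (upd d i) + ennreal (1 - q i) * f d))"

lemma inner_int:
  assumes i: "i \<in> {1..n}"
  shows "(\<integral>\<^sup>+w. f (if w < q i then upd d i else d) \<partial>U) = ennreal (q i) * f (upd d i) + ennreal (1 - q i) * f d"
proof -
  have "(\<integral>\<^sup>+w. f (if w < q i then upd d i else d) \<partial>U) =
     (\<integral>\<^sup>+w. f (upd d i) * indicator {w. w < q i} w + f d * indicator {w. \<not> w < q i} w \<partial>U)"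
    by (intro nn_integral_cong) (auto split: split_indicator)
  also have "\<dots> = f (upd d i) * emeasure U {w. w < q i} + f d * emeasure U {w. \<not> w < q i}"
    by (subst nn_integral_add) (auto simp: nn_integral_cmult_indicator)
  also have "\<dots> = ennreal (q i) * f (upd d i) + ennreal (1 - q i) * f d"
    using q_range[of i] i by (simp del: emeasure_uniform_measure add: U_less U_ge mult.commute)
  finally show ?thesis .
qed

lemma Pop_eq: "(\<integral>\<^sup>+u. \<integral>\<^sup>+w. f (mstep d u w) \<partial>U \<partial>U) = Pop f d"
proof -
  define h where "h i = ennreal (q i) * f (upd d i) + ennreal (1 - q i) * f d" for i
  have "(\<integral>\<^sup>+u. \<integral>\<^sup>+w. f (mstep d u w) \<partial>U \<partial>U) = (\<integral>\<^sup>+u. h (tried d u) \<partial>U)"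
    apply (intro nn_integral_cong)
    apply (subst mstep_eq)
    using tried_cond unfolding h_def by (simp add: inner_int)
  also have "\<dots> = (\<integral>\<^sup>+u. (\<Sum>i\<in>{1..n}. h i * indicator {u. tried d u = i} u) \<partial>U)"
  proof (intro nn_integral_cong)
    fix u
    have t: "tried d u \<in> {1..n}" using tried_cond by auto
    have "(\<Sum>i\<in>{1..n}. h i * indicator {u. tried d u = i} u) = (\<Sum>i\<in>{1..n}. if i = tried d u then h i else 0)"
      by (intro sum.cong) (auto split: split_indicator)
    also have "\<dots> = h (tried d u)" using t by (simp add: sum.delta')
    finally show "h (tried d u) = (\<Sum>i\<in>{1..n}. h i * indicator {u. tried d u = i} u)" by simp
  qed
  also have "\<dots> = (\<Sum>i\<in>{1..n}. h i * emeasure U {u. tried d u = i})"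
  proof (subst nn_integral_sum)
    fix i assume "i \<in> {1..n}"
    have "{u. tried d u = i} \<in> sets borel"
      using measurable_sets[OF tried_meas, of "{i}" d] \<open>i \<in> _\<close> by (simp add: vimage_def)
    then show "(\<lambda>u. h i * indicator {u. tried d u = i} u) \<in> borel_measurable U" by simp
  next
    show "(\<Sum>i\<in>{1..n}. \<integral>\<^sup>+ u. h i * indicator {u. tried d u = i} u \<partial>U) = (\<Sum>i\<in>{1..n}. h i * emeasure U {u. tried d u = i})"
    proof (intro sum.cong refl)
      fix i assume "i \<in> {1..n}"
      have "{u. tried d u = i} \<in> sets borel"
        using measurable_sets[OF tried_meas, of "{i}" d] \<open>i \<in> _\<close> by (simp add: vimage_def)
      then show "(\<integral>\<^sup>+ u. h i * indicator {u. tried d u = i} u \<partial>U) = h i * emeasure U {u. tried d u = i}"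
        by (subst nn_integral_cmult_indicator) auto
    qed
  qed
  also have "\<dots> = Pop f d"
    unfolding Pop_def h_def by (intro sum.cong refl) (simp del: emeasure_uniform_measure add: tried_prob mult.commute)
  finally show ?thesis .
qed


lemma sum_wt_div: "(\<Sum>i\<in>{1..n}. wt d i / weight_total n v A d) = 1"
  using W_pos[of d] by (simp add: sum_divide_distrib[symmetric] W_eq)

lemma Pop_real:
  assumes F0: "\<And>d. 0 \<le> F d"
  shows "Pop (\<lambda>d. ennreal (F d)) d =
    ennreal (F d + (\<Sum>i\<in>{1..n}. wt d i * q i * (F (upd d i) - F d)) / weight_total n v A d)"
proof -
  let ?W = "weight_total n v A d"
  have Wp: "?W > 0" by (rule W_pos)
  have "Pop (\<lambda>d. ennreal (F d)) d = (\<Sum>i\<in>{1..n}. ennreal (wt d i / ?W * (q i * F (upd d i) + (1 - q i) * F d)))"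
    unfolding Pop_def
  proof (intro sum.cong refl)
    fix i assume i: "i \<in> {1..n}"
    have q: "0 \<le> q i" "q i \<le> 1" using q_range[of i] i by auto
    have w: "0 \<le> wt d i / ?W" using wt_pos[of i d] Wp i by auto
    show "ennreal (wt d i / ?W) * (ennreal (q i) * ennreal (F (upd d i)) + ennreal (1 - q i) * ennreal (F d)) =
          ennreal (wt d i / ?W * (q i * F (upd d i) + (1 - q i) * F d))"
      using q w F0[of d] F0[of "upd d i"]
      by (simp add: ennreal_mult[symmetric] ennreal_plus[symmetric] del: ennreal_plus)
  qed
  also have "\<dots> = ennreal (\<Sum>i\<in>{1..n}. wt d i / ?W * (q i * F (upd d i) + (1 - q i) * F d))"
  proof (rule sum_ennreal)
    fix i assume i: "i \<in> {1..n}"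
    have q: "0 \<le> q i" "q i \<le> 1" using q_range[of i] i by auto
    have w: "0 \<le> wt d i / ?W" using wt_pos[of i d] Wp i by auto
    show "0 \<le> wt d i / ?W * (q i * F (upd d i) + (1 - q i) * F d)"
      using q w F0[of d] F0[of "upd d i"] by (intro mult_nonneg_nonneg add_nonneg_nonneg) auto
  qed
  also have "(\<Sum>i\<in>{1..n}. wt d i / ?W * (q i * F (upd d i) + (1 - q i) * F d)) =
      (\<Sum>i\<in>{1..n}. wt d i / ?W * F d) + (\<Sum>i\<in>{1..n}. wt d i * q i * (F (upd d i) - F d)) / ?W"
  proof -
    have "(\<Sum>i\<in>{1..n}. wt d i / ?W * (q i * F (upd d i) + (1 - q i) * F d)) =
      (\<Sum>i\<in>{1..n}. wt d i / ?W * F d + wt d i * q i * (F (upd d i) - F d) / ?W)"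
      using Wp by (intro sum.cong refl) (simp add: field_simps)
    also have "\<dots> = (\<Sum>i\<in>{1..n}. wt d i / ?W * F d) + (\<Sum>i\<in>{1..n}. wt d i * q i * (F (upd d i) - F d)) / ?W"
      by (simp add: sum.distrib sum_divide_distrib)
    finally show ?thesis .
  qed
  also have "(\<Sum>i\<in>{1..n}. wt d i / ?W * F d) = F d"
  proof -
    have "(\<Sum>i\<in>{1..n}. wt d i / ?W * F d) = (\<Sum>i\<in>{1..n}. wt d i / ?W) * F d"
      by (rule sum_distrib_right[symmetric])
    then show ?thesis using sum_wt_div[of d] by simp
  qed
  finally show ?thesis .
qed

lemma Pop_le:
  assumes F0: "\<And>d. 0 \<le> F d" and le: "(\<Sum>i\<in>{1..n}. wt d i * q i * (F (upd d i) - F d)) \<le> 0"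
  shows "Pop (\<lambda>d. ennreal (F d)) d \<le> ennreal (F d)"
proof -
  have "(\<Sum>i\<in>{1..n}. wt d i * q i * (F (upd d i) - F d)) / weight_total n v A d \<le> 0"
    using le W_pos[of d] by (simp add: divide_nonpos_pos)
  then show ?thesis unfolding Pop_real[OF F0] by (intro ennreal_leI) simp
qed


definition tot :: "(nat \<Rightarrow> nat) \<Rightarrow> nat" where
  "tot d = (\<Sum>j\<in>{1..n}. d j)"

lemma tot_upd: "i \<in> {1..n} \<Longrightarrow> tot (upd d i) = Suc (tot d)"
proof -
  assume i: "i \<in> {1..n}"
  have "tot (upd d i) = (\<Sum>j\<in>{1..n}. d j + (if j = i then 1 else 0))"
    unfolding tot_def by (intro sum.cong) auto
  also have "\<dots> = tot d + 1" using i by (simp add: sum.distrib tot_def)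
  finally show ?thesis by simp
qed

definition SN :: "nat \<Rightarrow> real" where
  "SN N = (\<Sum>j\<in>{1..n}. v j * (A j + real N))"

definition rho :: "nat \<Rightarrow> real" where
  "rho N = v 1 * A 1 * q 1 / SN N"

lemma one_in: "1 \<in> {1..n}" using n2 by auto

lemma q1_pos: "q 1 > 0"
  using q_strict[of 1 2] q_range[of 2] n2 by auto

lemma v1A1_pos: "v 1 * A 1 > 0"
  using vpos[of 1] A_pos[of 1] n2 by auto

lemma SN_ge: "v 1 * A 1 \<le> SN N"
proof -
  have "v 1 * A 1 \<le> v 1 * (A 1 + real N)" using vpos[of 1] n2 by simp
  also have "\<dots> \<le> SN N" unfolding SN_def
  proof (rule member_le_sum[OF one_in])
    fix x assume x: "x \<in> {1..n} - {1}"
    have "0 < v x" "0 < A x" using vpos[of x] A_pos[of x] x by auto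
    then show "0 \<le> v x * (A x + real N)" by simp
  qed simp
  finally show ?thesis .
qed

lemma SN_pos: "SN N > 0" using SN_ge[of N] v1A1_pos by linarith

lemma rho_pos: "rho N > 0"
  unfolding rho_def using v1A1_pos q1_pos SN_pos by auto

lemma rho_le1: "rho N \<le> 1"
proof -
  have "rho N \<le> v 1 * A 1 * 1 / SN N" unfolding rho_def using q1 SN_pos[of N] v1A1_pos
    by (intro divide_right_mono mult_left_mono) auto
  also have "\<dots> \<le> 1" using SN_ge[of N] SN_pos by simp
  finally show ?thesis .
qed

lemma W_le_SN: "tot d \<le> N \<Longrightarrow> weight_total n v A d \<le> SN N"
proof -
  assume t: "tot d \<le> N"
  have "d j \<le> N" if "j \<in> {1..n}" for j
    using member_le_sum[of j "{1..n}" d] that t unfolding tot_def by auto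
  then show ?thesis unfolding W_eq SN_def wt_def
  proof (intro sum_mono mult_left_mono)
    fix j assume j: "j \<in> {1..n}"
    show "0 \<le> v j" using vpos[of j] j by auto
    show "A j + real (d j) \<le> A j + real N" using \<open>\<And>j. j \<in> {1..n} \<Longrightarrow> d j \<le> N\<close>[OF j] by simp
  qed
qed

lemma wt1_ge: "v 1 * A 1 \<le> wt d 1"
  unfolding wt_def using vpos[of 1] n2 by simp

lemma purchase_step:
  fixes N t :: nat
  defines "\<mu> \<equiv> 2 / (2 - rho N)"
  defines "Fn \<equiv> \<lambda>t d. (if tot d \<le> N then (1/2::real) ^ (tot d) else 0) * \<mu> ^ t"
  shows "Pop (\<lambda>d. ennreal (Fn (Suc t) d)) d \<le> ennreal (Fn t d)"
proof -
  have mu_pos: "\<mu> > 0" unfolding \<mu>_def using rho_le1[of N] by simp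
  have F0: "0 \<le> Fn t' d'" for t' d' unfolding Fn_def using mu_pos by simp
  let ?W = "weight_total n v A d"
  let ?S = "\<Sum>i\<in>{1..n}. wt d i * q i * (Fn (Suc t) (upd d i) - Fn (Suc t) d)"
  have key: "Fn (Suc t) d + ?S / ?W \<le> Fn t d"
  proof (cases "tot d \<le> N")
    case False
    then have "Fn (Suc t) d = 0" "\<And>i. i \<in> {1..n} \<Longrightarrow> Fn (Suc t) (upd d i) = 0" "Fn t d = 0"
      unfolding Fn_def by (auto simp: tot_upd)
    then show ?thesis by simp
  next
    case True
    define x where "x = Fn (Suc t) d"
    have x0: "x \<ge> 0" unfolding x_def by (rule F0)
    have half: "Fn (Suc t) (upd d i) \<le> x / 2" if "i \<in> {1..n}" for i
      using that True mu_pos unfolding x_def Fn_def by (auto simp: tot_upd)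
    have term_le: "wt d i * q i * (Fn (Suc t) (upd d i) - x) \<le> wt d i * q i * (- x / 2)" if "i \<in> {1..n}" for i
    proof (rule mult_left_mono)
      show "Fn (Suc t) (upd d i) - x \<le> - x / 2" using half[OF that] by simp
      show "0 \<le> wt d i * q i" using wt_pos[of i d] q_range[of i] that by auto
    qed
    have term_np: "wt d i * q i * (Fn (Suc t) (upd d i) - x) \<le> 0" if "i \<in> {1..n}" for i
    proof -
      have "wt d i * q i * (- x / 2) \<le> 0" using wt_pos[of i d] q_range[of i] that x0
        by (intro mult_nonneg_nonpos) auto
      then show ?thesis using term_le[OF that] by linarith
    qed
    have "?S = wt d 1 * q 1 * (Fn (Suc t) (upd d 1) - x) + (\<Sum>i\<in>{1..n} - {1}. wt d i * q i * (Fn (Suc t) (upd d i) - x))"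
      unfolding x_def by (rule sum.remove[OF _ one_in]) simp
    also have "\<dots> \<le> wt d 1 * q 1 * (Fn (Suc t) (upd d 1) - x)"
    proof -
      have "(\<Sum>i\<in>{1..n} - {1}. wt d i * q i * (Fn (Suc t) (upd d i) - x)) \<le> 0"
        by (rule sum_nonpos) (use term_np in auto)
      then show ?thesis by linarith
    qed
    also have "\<dots> \<le> wt d 1 * q 1 * (- x / 2)" by (rule term_le[OF one_in])
    finally have S_le: "?S \<le> - (wt d 1 * q 1 * x / 2)" by simp
    have Wp: "?W > 0" by (rule W_pos)
    have ratio: "rho N \<le> wt d 1 * q 1 / ?W"
    proof -
      have "v 1 * A 1 / SN N \<le> wt d 1 / ?W"
        using wt1_ge[of d] W_le_SN[OF True] v1A1_pos Wp by (intro frac_le) auto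
      then have "v 1 * A 1 / SN N * q 1 \<le> wt d 1 / ?W * q 1" using q1_pos by (intro mult_right_mono) auto
      then show ?thesis unfolding rho_def by (simp add: field_simps)
    qed
    have "?S / ?W \<le> - (wt d 1 * q 1 * x / 2) / ?W" using S_le Wp by (intro divide_right_mono) auto
    also have "\<dots> = - (wt d 1 * q 1 / ?W) * (x / 2)" by (simp add: field_simps)
    also have "\<dots> \<le> - rho N * (x / 2)" using ratio x0 by (intro mult_right_mono) auto
    finally have "Fn (Suc t) d + ?S / ?W \<le> x * (1 - rho N / 2)" unfolding x_def by (simp add: algebra_simps)
    also have "x * (1 - rho N / 2) = Fn t d"
    proof -
      have "\<mu> * (1 - rho N / 2) = 1" unfolding \<mu>_def using rho_le1[of N] by (simp add: field_simps)
      have "x * (1 - rho N / 2) = (1/2) ^ tot d * \<mu> ^ t * (\<mu> * (1 - rho N / 2))"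
        unfolding x_def Fn_def using True by (simp add: algebra_simps)
      also have "\<dots> = Fn t d" unfolding Fn_def using True \<open>\<mu> * (1 - rho N / 2) = 1\<close> by simp
      finally show ?thesis .
    qed
    finally show ?thesis .
  qed
  show ?thesis
    unfolding Pop_real[OF F0] using key by (intro ennreal_leI) simp
qed

end



lemma bern_powr:
  fixes a \<alpha> :: real
  assumes "a > 0" "0 \<le> \<alpha>" "\<alpha> \<le> 1"
  shows "a powr \<alpha> \<le> 1 + \<alpha> * (a - 1)"
proof (cases "\<alpha> = 1")
  case True then show ?thesis using assms by simp
next
  case False
  have "a powr \<alpha> * 1 powr (1 - \<alpha>) \<le> \<alpha> * a + (1 - \<alpha>) * 1"
    by (rule Youngs_inequality_0) (use assms in auto)
  then show ?thesis by (simp add: algebra_simps)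
qed

context mparams
begin

definition gam :: "nat \<Rightarrow> real" where "gam i = v i * q i / (v 1 * q 1)"
definition pp :: real where "pp = min 1 (A 1 / 2)"
definition sig :: "nat \<Rightarrow> real" where "sig i = (1 + gam i) / 2"
definition ss :: "nat \<Rightarrow> real" where "ss i = pp * sig i"
definition xz :: "nat \<Rightarrow> real" where "xz i = gam i / (sig i - gam i) + 1"
definition hh :: "nat \<Rightarrow> real \<Rightarrow> real" where "hh i x = x powr (- ss i) * 2 powr (max 0 (xz i - x))"
definition YY :: "nat \<Rightarrow> (nat \<Rightarrow> nat) \<Rightarrow> real" where
  "YY i d = (A i + real (d i)) powr pp * hh i (A 1 + real (d 1))"

lemma v1q1_pos: "v 1 * q 1 > 0" using vpos[of 1] q1_pos n2 by auto

lemma gam_range: assumes i: "i \<in> {2..n}" shows "0 \<le> gam i" "gam i < 1"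
proof -
  have vi: "0 < v i" "v i \<le> v 1" using vpos[of i] v_mono[of 1 i] i by auto
  have qi: "0 \<le> q i" "q i < q 1" using q_range[of i] q_strict[of 1 i] i by auto
  show "0 \<le> gam i" unfolding gam_def using vi qi v1q1_pos by auto
  have "v i * q i \<le> v 1 * q i" using vi qi by (intro mult_right_mono) auto
  also have "\<dots> < v 1 * q 1" using qi vpos[of 1] n2 by auto
  finally show "gam i < 1" unfolding gam_def using v1q1_pos by simp
qed

lemma pp_range: "0 < pp" "pp \<le> 1" "pp \<le> A 1 / 2"
  unfolding pp_def using A_pos[of 1] n2 by auto

lemma sig_range: assumes i: "i \<in> {2..n}" shows "gam i < sig i" "sig i < 1" "0 < sig i"
  using gam_range[OF i] unfolding sig_def by auto

lemma ss_range: assumes i: "i \<in> {2..n}" shows "0 < ss i" "ss i \<le> 1"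
  using sig_range[OF i] pp_range unfolding ss_def
  by (auto intro: mult_pos_pos) (metis less_eq_real_def mult_le_one)

lemma hh_pos: "x > 0 \<Longrightarrow> hh i x > 0" unfolding hh_def by simp

lemma hh_lower: "x > 0 \<Longrightarrow> x powr (- ss i) \<le> hh i x"
  unfolding hh_def by (intro mult_le_cancel_left1[THEN iffD2] disjI1 conjI) (auto intro: ge_one_powr_ge_zero)


lemma hh_step:
  assumes i: "i \<in> {2..n}" and x: "A 1 \<le> x"
  shows "hh i (x + 1) \<le> hh i x * (1 - pp * gam i / x)"
proof -
  have A1: "A 1 > 0" using A_pos[of 1] n2 by auto
  have xp: "x > 0" using x A1 by linarith
  have g: "0 \<le> gam i" "gam i < 1" by (rule gam_range[OF i])+
  have sg: "gam i < sig i" "sig i < 1" "0 < sig i" by (rule sig_range[OF i])+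
  have sr: "0 < ss i" "ss i \<le> 1" by (rule ss_range[OF i])+
  have pr: "0 < pp" "pp \<le> 1" "pp \<le> A 1 / 2" by (rule pp_range)+
  have small: "pp * gam i / x \<le> 1 / 2"
  proof -
    have "pp * gam i \<le> pp * 1" using g pr by (intro mult_left_mono) auto
    also have "\<dots> \<le> A 1 / 2" using pr by simp
    also have "\<dots> \<le> x / 2" using x by simp
    finally show ?thesis using xp by (simp add: divide_le_eq)
  qed
  have m1: "1 \<le> 2 powr (max 0 (xz i - x))" by (rule ge_one_powr_ge_zero) auto
  show ?thesis
  proof (cases "x + 1 \<le> xz i")
    case True
    have e1: "max 0 (xz i - (x + 1)) = (xz i - x) - 1" "max 0 (xz i - x) = xz i - x" using True by auto
    have "hh i (x + 1) = (x + 1) powr (- ss i) * (2 powr (xz i - x) / 2)"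
      unfolding hh_def e1 by (simp add: powr_diff)
    also have "\<dots> \<le> x powr (- ss i) * (2 powr (xz i - x) / 2)"
      using sr xp by (intro mult_right_mono powr_mono2') auto
    also have "\<dots> = hh i x * (1 / 2)" unfolding hh_def e1 by simp
    also have "\<dots> \<le> hh i x * (1 - pp * gam i / x)"
      using small hh_pos[OF xp, of i] by (intro mult_left_mono) auto
    finally show ?thesis .
  next
    case False
    have e1: "max 0 (xz i - (x + 1)) = 0" using False by auto
    have q: "x / (x + 1) > 0" using xp by simp
    have eq1: "(x + 1) powr (- ss i) = x powr (- ss i) * (x / (x + 1)) powr (ss i)"
      using xp by (simp add: powr_divide powr_minus divide_simps)
    have b1: "(x / (x + 1)) powr (ss i) \<le> 1 + ss i * (x / (x + 1) - 1)"
      using bern_powr[OF q, of "ss i"] sr by auto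
    have eq2: "1 + ss i * (x / (x + 1) - 1) = 1 - ss i / (x + 1)"
      using xp by (simp add: field_simps)
    have b2: "1 - ss i / (x + 1) \<le> 1 - pp * gam i / x"
    proof -
      have "gam i / (sig i - gam i) < x" using False unfolding xz_def by simp
      then have "gam i < x * (sig i - gam i)" using sg by (simp add: divide_less_eq mult.commute)
      then have "gam i * (x + 1) \<le> sig i * x" by (simp add: algebra_simps)
      then have "pp * (gam i * (x + 1)) \<le> pp * (sig i * x)" using pr by (intro mult_left_mono) auto
      then have "pp * gam i * (x + 1) \<le> ss i * x" unfolding ss_def by (simp add: mult.assoc)
      then have "pp * gam i / x \<le> ss i / (x + 1)"
        using xp by (simp add: divide_simps mult.commute)
      then show ?thesis by simp
    qed
    have xs: "0 \<le> x powr (- ss i)" by simp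
    have "(x + 1) powr (- ss i) \<le> x powr (- ss i) * (1 - pp * gam i / x)"
      unfolding eq1 using b1 eq2 b2 xs by (intro mult_left_mono) auto
    also have "\<dots> \<le> x powr (- ss i) * 2 powr (max 0 (xz i - x)) * (1 - pp * gam i / x)"
    proof -
      have "x powr (- ss i) * 1 \<le> x powr (- ss i) * 2 powr (max 0 (xz i - x))"
        using m1 xs by (intro mult_left_mono) auto
      moreover have "0 \<le> 1 - pp * gam i / x" using small by linarith
      ultimately show ?thesis by (intro mult_right_mono) auto
    qed
    finally show ?thesis unfolding hh_def e1 by simp
  qed
qed


lemma conc_powr:
  fixes a p :: real
  assumes a: "a > 0" and p: "0 \<le> p" "p \<le> 1"
  shows "a * ((a + 1) powr p - a powr p) \<le> p * a powr p"
proof -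
  have e: "a + 1 = a * (1 + 1 / a)" using a by (simp add: field_simps)
  have "(a + 1) powr p = a powr p * (1 + 1 / a) powr p"
    using a by (subst e) (simp add: powr_mult)
  also have "\<dots> \<le> a powr p * (1 + p * (1 / a))"
  proof (rule mult_left_mono)
    have "0 < 1 + 1 / a" using a by (simp add: add_pos_pos)
    from bern_powr[OF this p] show "(1 + 1 / a) powr p \<le> 1 + p * (1 / a)" by simp
  qed simp
  finally have "(a + 1) powr p - a powr p \<le> a powr p * p / a" by (simp add: algebra_simps)
  then have "a * ((a + 1) powr p - a powr p) \<le> a * (a powr p * p / a)" using a by (intro mult_left_mono) auto
  also have "\<dots> = p * a powr p" using a by simp
  finally show ?thesis .
qed

lemma YY_nonneg: "0 \<le> YY i d" unfolding YY_def hh_def by simp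

lemma YY_super:
  assumes i: "i \<in> {2..n}"
  shows "Pop (\<lambda>d. ennreal (YY i d)) d \<le> ennreal (YY i d)"
proof (rule Pop_le[OF YY_nonneg])
  have i1: "i \<noteq> 1" "i \<in> {1..n}" using i by auto
  define f where "f j = wt d j * q j * (YY i (upd d j) - YY i d)" for j
  have "(\<Sum>j\<in>{1..n}. f j) = (\<Sum>j\<in>{1, i}. f j)"
  proof (rule sum.mono_neutral_right)
    show "{1, i} \<subseteq> {1..n}" using i1 one_in by auto
    show "\<forall>j\<in>{1..n} - {1, i}. f j = 0"
    proof
      fix j assume "j \<in> {1..n} - {1, i}"
      then have "j \<noteq> 1" "j \<noteq> i" by auto
      then show "f j = 0" unfolding f_def YY_def by simp
    qed
  qed simp
  also have "\<dots> = f 1 + f i" using i1 by simp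
  also have "\<dots> \<le> 0"
  proof -
    define a where "a = A i + real (d i)"
    define b where "b = A 1 + real (d 1)"
    have ap: "a > 0" unfolding a_def using A_pos[of i] i by (simp add: add_pos_nonneg)
    have bA: "A 1 \<le> b" unfolding b_def by simp
    have bp: "b > 0" using bA A_pos[of 1] n2 by linarith
    have pr: "0 < pp" "pp \<le> 1" by (rule pp_range)+
    have hb: "hh i b > 0" by (rule hh_pos[OF bp])
    have ne: "v 1 \<noteq> 0" "q 1 \<noteq> 0" using v1q1_pos by auto
    have gv: "gam i * (v 1 * q 1) = v i * q i" unfolding gam_def using ne by simp
    have Y1: "YY i (upd d 1) = a powr pp * hh i (b + 1)"
      unfolding YY_def a_def b_def using i1 by (simp add: ac_simps)
    have Yi: "YY i (upd d i) = (a + 1) powr pp * hh i b"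
      unfolding YY_def a_def b_def using i1 by (simp add: ac_simps)
    have Y0: "YY i d = a powr pp * hh i b" unfolding YY_def a_def b_def by simp
    have f1: "f 1 \<le> - (v i * q i) * pp * a powr pp * hh i b"
    proof -
      have "f 1 = v 1 * q 1 * b * a powr pp * (hh i (b + 1) - hh i b)"
        unfolding f_def Y1 Y0 wt_def b_def by (simp add: algebra_simps)
      also have "\<dots> \<le> v 1 * q 1 * b * a powr pp * (hh i b * (1 - pp * gam i / b) - hh i b)"
        using hh_step[OF i bA] v1q1_pos bp by (intro mult_left_mono) (auto intro!: mult_nonneg_nonneg)
      also have "\<dots> = - (gam i * (v 1 * q 1)) * pp * a powr pp * hh i b"
        using bp by (simp add: field_simps)
      finally show ?thesis unfolding gv .
    qed
    have fi: "f i \<le> (v i * q i) * pp * a powr pp * hh i b"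
    proof -
      have vq: "0 \<le> v i * q i" using vpos[of i] q_range[of i] i1 by auto
      have "f i = (v i * q i * hh i b) * (a * ((a + 1) powr pp - a powr pp))"
        unfolding f_def Yi Y0 wt_def a_def by (simp add: algebra_simps)
      also have "\<dots> \<le> (v i * q i * hh i b) * (pp * a powr pp)"
        using conc_powr[OF ap, of pp] pr vq hb by (intro mult_left_mono) auto
      finally show ?thesis by (simp add: algebra_simps)
    qed
    have "- (v i * q i) * pp * a powr pp * hh i b = - (v i * q i * pp * a powr pp * hh i b)" by simp
    then show ?thesis using f1 fi by linarith
  qed
  finally show "(\<Sum>j\<in>{1..n}. wt d j * q j * (YY i (upd d j) - YY i d)) \<le> 0" unfolding f_def .
qed


lemma YY_bound:
  assumes i: "i \<in> {2..n}" and Y: "YY i d < C"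
  shows "A i + real (d i) \<le> C powr (1 / pp) * (A 1 + real (d 1)) powr sig i"
proof -
  define a where "a = A i + real (d i)"
  define b where "b = A 1 + real (d 1)"
  have ap: "a > 0" unfolding a_def using A_pos[of i] i by (simp add: add_pos_nonneg)
  have bp: "b > 0" unfolding b_def using A_pos[of 1] n2 by (simp add: add_pos_nonneg)
  have pr: "0 < pp" "pp \<le> 1" by (rule pp_range)+
  have "a powr pp * b powr (- ss i) \<le> YY i d"
    unfolding YY_def a_def[symmetric] b_def[symmetric] using hh_lower[OF bp, of i]
    by (intro mult_left_mono) auto
  then have "a powr pp * b powr (- ss i) < C" using Y by linarith
  then have "a powr pp * b powr (- ss i) * b powr (ss i) < C * b powr (ss i)"
    using bp by (intro mult_strict_right_mono) auto
  moreover have "b powr (- ss i) * b powr (ss i) = 1" using bp by (simp add: powr_add[symmetric])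
  ultimately have lt: "a powr pp < C * b powr (ss i)" by (simp add: mult.assoc)
  have C0: "C > 0" using lt ap bp by (smt (verit) powr_gt_zero zero_less_mult_iff)
  have "a = (a powr pp) powr (1 / pp)" using ap pr by (simp add: powr_powr)
  also have "\<dots> \<le> (C * b powr (ss i)) powr (1 / pp)"
    using lt pr by (intro powr_mono2) auto
  also have "\<dots> = C powr (1 / pp) * b powr (sig i)"
    using C0 bp pr by (simp add: powr_mult powr_powr ss_def)
  finally show ?thesis unfolding a_def b_def .
qed

lemma tot_split: "real (tot d) = real (d 1) + (\<Sum>i\<in>{2..n}. real (d i))"
proof -
  have "{1..n} = insert 1 {2..n}" using n2 by auto
  then show ?thesis unfolding tot_def by (simp add: of_nat_sum)
qed

lemma share_split: "market_share n d 1 = real (d 1) / (real (d 1) + (\<Sum>i\<in>{2..n}. real (d i)))"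
proof -
  have "(\<Sum>j\<in>{1..n}. real (d j)) = real (tot d)" unfolding tot_def by (simp add: of_nat_sum)
  then show ?thesis unfolding market_share_def tot_split by simp
qed

lemma deterministic:
  fixes dd :: "nat \<Rightarrow> (nat \<Rightarrow> nat)"
  assumes mono: "\<And>t j. dd t j \<le> dd (Suc t) j"
    and inf: "\<And>N. \<exists>t. N < tot (dd t)"
    and bdd: "\<And>i. i \<in> {2..n} \<Longrightarrow> \<exists>C. \<forall>t. YY i (dd t) < C"
  shows "(\<lambda>t. market_share n (dd t) 1) \<longlonglongrightarrow> 1"
proof -
  have mono': "dd s j \<le> dd t j" if "s \<le> t" for s t j
    using that by (induction t) (auto simp: le_Suc_eq intro: order_trans[OF _ mono])
  from bdd obtain C where C: "\<And>i t. i \<in> {2..n} \<Longrightarrow> YY i (dd t) < C i" by metis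
  define K where "K i = C i powr (1 / pp)" for i
  have K0: "K i \<ge> 0" for i unfolding K_def by simp
  have bound: "real (dd t i) \<le> K i * (A 1 + real (dd t 1)) powr sig i" if i: "i \<in> {2..n}" for i t
  proof -
    have "A i > 0" using A_pos[of i] i by auto
    then show ?thesis using YY_bound[OF i C[OF i, of t]] unfolding K_def by linarith
  qed
  have A1: "A 1 > 0" using A_pos[of 1] n2 by auto
  have d1_inf: "\<exists>T. \<forall>t\<ge>T. B < real (dd t 1)" for B :: real
  proof -
    define B' where "B' = max B 0"
    define N where "N = nat \<lceil>B' + (\<Sum>i\<in>{2..n}. K i * (A 1 + B') powr sig i)\<rceil>"
    obtain t0 where t0: "N < tot (dd t0)" using inf by blast
    have "B' < real (dd t0 1)"
    proof (rule ccontr)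
      assume "\<not> B' < real (dd t0 1)"
      then have le: "real (dd t0 1) \<le> B'" by simp
      have "real (tot (dd t0)) = real (dd t0 1) + (\<Sum>i\<in>{2..n}. real (dd t0 i))" by (rule tot_split)
      also have "\<dots> \<le> B' + (\<Sum>i\<in>{2..n}. K i * (A 1 + B') powr sig i)"
      proof (rule add_mono[OF le sum_mono])
        fix i assume i: "i \<in> {2..n}"
        have "real (dd t0 i) \<le> K i * (A 1 + real (dd t0 1)) powr sig i" by (rule bound[OF i])
        also have "\<dots> \<le> K i * (A 1 + B') powr sig i"
          using le K0[of i] sig_range[OF i] A1 by (intro mult_left_mono powr_mono2) auto
        finally show "real (dd t0 i) \<le> K i * (A 1 + B') powr sig i" .
      qed
      also have "\<dots> \<le> real N" unfolding N_def by linarith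
      finally show False using t0 by simp
    qed
    then have "\<forall>t\<ge>t0. B < real (dd t 1)"
      using mono' unfolding B'_def by (smt (verit) of_nat_le_iff)
    then show ?thesis by blast
  qed
  have d1_top: "filterlim (\<lambda>t. real (dd t 1)) at_top sequentially"
    unfolding filterlim_at_top_dense eventually_sequentially
    using d1_inf by (meson less_imp_le)
  have ratio0: "(\<lambda>t. real (dd t i) / real (dd t 1)) \<longlonglongrightarrow> 0" if i: "i \<in> {2..n}" for i
  proof (rule tendsto_sandwich[where f="\<lambda>_. 0" and h="\<lambda>t. K i * 2 powr sig i * real (dd t 1) powr (sig i - 1)"])
    show "\<forall>\<^sub>F t in sequentially. 0 \<le> real (dd t i) / real (dd t 1)" by simp
    obtain T where T: "\<And>t. t \<ge> T \<Longrightarrow> A 1 < real (dd t 1)" using d1_inf[of "A 1"] by blast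
    show "\<forall>\<^sub>F t in sequentially. real (dd t i) / real (dd t 1) \<le> K i * 2 powr sig i * real (dd t 1) powr (sig i - 1)"
      unfolding eventually_sequentially
    proof (intro exI allI impI)
      fix t assume "T \<le> t"
      then have At: "A 1 < real (dd t 1)" by (rule T)
      define x where "x = real (dd t 1)"
      have xp: "x > 0" using At A1 unfolding x_def by linarith
      have "real (dd t i) \<le> K i * (A 1 + x) powr sig i" unfolding x_def by (rule bound[OF i])
      also have "\<dots> \<le> K i * (2 * x) powr sig i"
        using At A1 K0[of i] sig_range[OF i] unfolding x_def by (intro mult_left_mono powr_mono2) auto
      also have "\<dots> = K i * 2 powr sig i * x powr sig i" using xp by (simp add: powr_mult)
      finally have "real (dd t i) / x \<le> K i * 2 powr sig i * x powr sig i / x"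
        using xp by (intro divide_right_mono) auto
      also have "x powr sig i / x = x powr (sig i - 1)" using xp by (simp add: powr_diff)
      then have "K i * 2 powr sig i * x powr sig i / x = K i * 2 powr sig i * x powr (sig i - 1)"
        unfolding times_divide_eq_right[symmetric] by simp
      finally show "real (dd t i) / real (dd t 1) \<le> K i * 2 powr sig i * real (dd t 1) powr (sig i - 1)"
        unfolding x_def .
    qed
    have "(\<lambda>t. real (dd t 1) powr (sig i - 1)) \<longlonglongrightarrow> 0"
      using sig_range[OF i] by (intro tendsto_neg_powr d1_top) auto
    then show "(\<lambda>t. K i * 2 powr sig i * real (dd t 1) powr (sig i - 1)) \<longlonglongrightarrow> 0"
      using tendsto_mult_right_zero by blast
  qed simp
  have Rsum: "(\<lambda>t. \<Sum>i\<in>{2..n}. real (dd t i) / real (dd t 1)) \<longlonglongrightarrow> 0"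
  proof -
    have "(\<lambda>t. \<Sum>i\<in>{2..n}. real (dd t i) / real (dd t 1)) \<longlonglongrightarrow> (\<Sum>i\<in>{2..n}. (0::real))"
      by (rule tendsto_sum) (rule ratio0)
    then show ?thesis by simp
  qed
  have "(\<lambda>t. 1 / (1 + (\<Sum>i\<in>{2..n}. real (dd t i) / real (dd t 1)))) \<longlonglongrightarrow> 1 / (1 + 0)"
    by (intro tendsto_intros Rsum) simp
  then have lim: "(\<lambda>t. 1 / (1 + (\<Sum>i\<in>{2..n}. real (dd t i) / real (dd t 1)))) \<longlonglongrightarrow> 1" by simp
  obtain T where T: "\<And>t. t \<ge> T \<Longrightarrow> 0 < real (dd t 1)" using d1_inf[of 0] by blast
  have ev: "\<forall>\<^sub>F t in sequentially. 1 / (1 + (\<Sum>i\<in>{2..n}. real (dd t i) / real (dd t 1))) = market_share n (dd t) 1"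
    unfolding eventually_sequentially
  proof (intro exI allI impI)
    fix t assume "T \<le> t"
    then have p: "0 < real (dd t 1)" by (rule T)
    have "(\<Sum>i\<in>{2..n}. real (dd t i) / real (dd t 1)) = (\<Sum>i\<in>{2..n}. real (dd t i)) / real (dd t 1)"
      by (simp add: sum_divide_distrib)
    moreover have "1 / (1 + S / x) = x / (x + S)" if "x > 0" "S \<ge> 0" for x S :: real
    proof -
      have "x + S > 0" using that by linarith
      then show ?thesis using that by (simp add: field_simps)
    qed
    ultimately show "1 / (1 + (\<Sum>i\<in>{2..n}. real (dd t i) / real (dd t 1))) = market_share n (dd t) 1"
      unfolding share_split using p by (simp add: sum_nonneg)
  qed
  show ?thesis using Lim_transform_eventually[OF lim ev] .
qed

end



locale mkt = mparams n v A q + prob_space M for n v A q and M :: "'a measure" +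
  fixes X :: "nat \<Rightarrow> bool \<Rightarrow> 'a \<Rightarrow> real"
  assumes indepX: "indep_vars (\<lambda>_. borel) (\<lambda>(t, b). X t b) UNIV"
  and unifX: "\<And>t b. distr M borel (X t b) = uniform_measure lborel {0..1::real}"
begin


lemma X_meas[measurable]: "X t b \<in> borel_measurable M"
  using indepX unfolding indep_vars_def by auto

definition QQ :: "(nat \<times> bool) set \<Rightarrow> 'a \<Rightarrow> (nat \<times> bool \<Rightarrow> real)" where
  "QQ K \<omega> = restrict (\<lambda>i. (\<lambda>(t, b). X t b) i \<omega>) K"

lemma QQ_meas[measurable]: "QQ K \<in> measurable M (PiM K (\<lambda>_. borel))"
  unfolding QQ_def by (rule measurable_restrict) (auto split: prod.split)

lemma L1:
  assumes tb: "(t,b) \<notin> K"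
    and g[measurable]: "(\<lambda>(x,u). g x u) \<in> borel_measurable (PiM K (\<lambda>_. borel) \<Otimes>\<^sub>M borel)"
  shows "(\<integral>\<^sup>+\<omega>. g (QQ K \<omega>) (X t b \<omega>) \<partial>M) = (\<integral>\<^sup>+\<omega>. (\<integral>\<^sup>+u. g (QQ K \<omega>) u \<partial>U) \<partial>M)"
proof -
  let ?PK = "PiM K (\<lambda>_. borel :: real measure)" and ?PT = "PiM {(t,b)} (\<lambda>_. borel :: real measure)"
  define R where "R = QQ {(t,b)}"
  have ind: "indep_var ?PK (QQ K) ?PT R"
    using indep_var_restrict[OF indepX, of K "{(t,b)}"] tb unfolding QQ_def R_def by auto
  have rvQ: "random_variable ?PK (QQ K)" by measurable
  have rvR: "random_variable ?PT R" unfolding R_def by measurable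
  have eq: "distr M ?PK (QQ K) \<Otimes>\<^sub>M distr M ?PT R = distr M (?PK \<Otimes>\<^sub>M ?PT) (\<lambda>x. (QQ K x, R x))"
    using indep_var_distribution_eq ind by auto
  interpret PQ: prob_space "distr M ?PK (QQ K)" by (rule prob_space_distr[OF rvQ])
  interpret PR: prob_space "distr M ?PT R" by (rule prob_space_distr[OF rvR])
  interpret PU: prob_space U by (rule U_prob)
  have Gm: "(\<lambda>(x,y). g x (y (t,b))) \<in> borel_measurable (?PK \<Otimes>\<^sub>M ?PT)"
    by measurable
  have RX: "R \<omega> (t,b) = X t b \<omega>" for \<omega> unfolding R_def QQ_def by simp
  have "(\<integral>\<^sup>+\<omega>. g (QQ K \<omega>) (X t b \<omega>) \<partial>M) = (\<integral>\<^sup>+\<omega>. (\<lambda>(x,y). g x (y (t,b))) (QQ K \<omega>, R \<omega>) \<partial>M)"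
    by (simp add: RX)
  also have "\<dots> = (\<integral>\<^sup>+z. (\<lambda>(x,y). g x (y (t,b))) z \<partial>distr M (?PK \<Otimes>\<^sub>M ?PT) (\<lambda>x. (QQ K x, R x)))"
    by (rule nn_integral_distr[symmetric]) (use Gm rvR in measurable)
  also have "\<dots> = (\<integral>\<^sup>+z. (\<lambda>(x,y). g x (y (t,b))) z \<partial>(distr M ?PK (QQ K) \<Otimes>\<^sub>M distr M ?PT R))"
    by (simp add: eq)
  also have "\<dots> = (\<integral>\<^sup>+x. \<integral>\<^sup>+y. g x (y (t,b)) \<partial>distr M ?PT R \<partial>distr M ?PK (QQ K))"
    by (subst PR.nn_integral_fst[symmetric]) (use Gm in auto)
  also have "\<dots> = (\<integral>\<^sup>+x. \<integral>\<^sup>+\<omega>. g x (X t b \<omega>) \<partial>M \<partial>distr M ?PK (QQ K))"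
    apply (rule nn_integral_cong)
    apply (subst nn_integral_distr[OF rvR])
    using Gm apply (simp add: RX)
    apply (simp add: RX)
    done
  also have "\<dots> = (\<integral>\<^sup>+x. \<integral>\<^sup>+u. g x u \<partial>U \<partial>distr M ?PK (QQ K))"
    apply (rule nn_integral_cong)
    apply (subst unifX[of t b, symmetric])
    apply (subst nn_integral_distr)
      apply simp_all
    done
  also have "\<dots> = (\<integral>\<^sup>+\<omega>. (\<integral>\<^sup>+u. g (QQ K \<omega>) u \<partial>U) \<partial>M)"
    by (rule nn_integral_distr[OF rvQ]) measurable
  finally show ?thesis .
qed


definition D :: "nat \<Rightarrow> (nat \<times> bool \<Rightarrow> real) \<Rightarrow> (nat \<Rightarrow> nat)" where
  "D t Q = market_traj n v A q (\<lambda>s b. Q (s, b)) t"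

definition traj :: "nat \<Rightarrow> 'a \<Rightarrow> (nat \<Rightarrow> nat)" where
  "traj t \<omega> = market_traj n v A q (\<lambda>s b. X s b \<omega>) t"

lemma traj_cong: "(\<And>s b. s < t \<Longrightarrow> xs s b = ys s b) \<Longrightarrow> market_traj n v A q xs t = market_traj n v A q ys t"
  by (induction t) auto

abbreviation "Kt t \<equiv> {..<t} \<times> (UNIV :: bool set)"

lemma traj_QQ: "Kt t \<subseteq> K \<Longrightarrow> traj t \<omega> = D t (QQ K \<omega>)"
  unfolding traj_def D_def QQ_def by (rule traj_cong) auto

lemma D_Sn: "D t Q \<in> Sn"
  by (induction t) (auto simp: D_def zero_Sn mstep_Sn)

lemma D_Suc: "D (Suc t) Q = mstep (D t Q) (Q (t, True)) (Q (t, False))"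
  by (simp add: D_def)

lemma D_meas: "Kt t \<subseteq> K \<Longrightarrow> D t \<in> measurable (PiM K (\<lambda>_. borel)) (count_space Sn)"
proof (induction t)
  case 0
  then show ?case using zero_Sn by (simp add: D_def)
next
  case (Suc t)
  have "Kt t \<subseteq> K" using Suc.prems by (auto simp: subset_eq)
  then have IH: "D t \<in> measurable (PiM K (\<lambda>_. borel)) (count_space Sn)" using Suc.IH by blast
  have tT: "(t, True) \<in> K" "(t, False) \<in> K" using Suc.prems by auto
  have "(\<lambda>Q. (\<lambda>d Q. mstep d (Q (t, True)) (Q (t, False))) (D t Q) Q) \<in> measurable (PiM K (\<lambda>_. borel)) (count_space Sn)"
  proof (rule measurable_compose_countable'[OF _ IH countable_Sn])
    fix d assume d: "d \<in> Sn"
    have "(\<lambda>x. mstep d (fst x) (snd x)) \<circ> (\<lambda>Q. (Q (t, True), Q (t, False))) \<in> measurable (PiM K (\<lambda>_. borel)) (count_space Sn)"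
      by (rule measurable_comp[OF _ mstep_meas[OF d]]) (use tT in measurable)
    then show "(\<lambda>Q. mstep d (Q (t, True)) (Q (t, False))) \<in> measurable (PiM K (\<lambda>_. borel)) (count_space Sn)"
      by (simp add: comp_def)
  qed
  then show ?case by (simp add: D_Suc)
qed

lemma fun_Sn_meas: "f \<in> measurable (count_space Sn) (borel :: ennreal measure)"
  by (simp add: measurable_count_space_eq1)


lemma fm2: fixes f :: "(nat \<Rightarrow> nat) \<Rightarrow> ennreal" shows "d \<in> Sn \<Longrightarrow> (\<lambda>x. f (mstep d (fst x) (snd x))) \<in> borel_measurable (borel \<Otimes>\<^sub>M borel)"
  using measurable_comp[OF mstep_meas fun_Sn_meas, of d f] by (simp add: comp_def)

lemma fm1: fixes f :: "(nat \<Rightarrow> nat) \<Rightarrow> ennreal" shows "d \<in> Sn \<Longrightarrow> (\<lambda>w. f (mstep d u w)) \<in> borel_measurable borel"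
proof -
  assume d: "d \<in> Sn"
  have "(\<lambda>x. f (mstep d (fst x) (snd x))) \<circ> (\<lambda>w. (u, w)) \<in> borel_measurable borel"
    by (rule measurable_comp[OF _ fm2[OF d]]) simp
  then show ?thesis by (simp add: comp_def)
qed

lemma fm1U: fixes f :: "(nat \<Rightarrow> nat) \<Rightarrow> ennreal" shows "d \<in> Sn \<Longrightarrow> (\<lambda>w. f (mstep d u w)) \<in> borel_measurable U"
proof -
  assume d: "d \<in> Sn"
  have sU: "sets U = sets (borel::real measure)" by simp
  show ?thesis by (subst measurable_cong_sets[OF sU refl]) (rule fm1[OF d])
qed

lemma sU: "sets U = sets (borel::real measure)" by simp

lemma traj_Sn: "traj t \<omega> \<in> Sn"
  using traj_QQ[of t "Kt t" \<omega>] D_Sn by simp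

lemma int_meas: fixes f :: "(nat \<Rightarrow> nat) \<Rightarrow> ennreal" shows "d \<in> Sn \<Longrightarrow> (\<lambda>u. \<integral>\<^sup>+w. f (mstep d u w) \<partial>U) \<in> borel_measurable borel"
proof -
  assume d: "d \<in> Sn"
  interpret PU: prob_space U by (rule U_prob)
  have "sets (borel \<Otimes>\<^sub>M U) = sets (borel \<Otimes>\<^sub>M (borel::real measure))"
    by (intro sets_pair_measure_cong) auto
  then have "(\<lambda>(u,w). f (mstep d u w)) \<in> borel_measurable (borel \<Otimes>\<^sub>M U)"
    using fm2[OF d, of f] by (subst measurable_cong_sets[OF _ refl]) (auto simp: case_prod_beta')
  then show ?thesis by (rule PU.borel_measurable_nn_integral)
qed

lemma L2:
  assumes G[measurable]: "G \<in> borel_measurable (PiM (Kt t) (\<lambda>_. borel))"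
  shows "(\<integral>\<^sup>+\<omega>. G (QQ (Kt t) \<omega>) * f (traj (Suc t) \<omega>) \<partial>M) = (\<integral>\<^sup>+\<omega>. G (QQ (Kt t) \<omega>) * Pop f (traj t \<omega>) \<partial>M)"
proof -
  define K1 where "K1 = insert (t,True) (Kt t)"
  have sub: "Kt t \<subseteq> K1" by (auto simp: K1_def)
  have nF: "(t,False) \<notin> K1" by (auto simp: K1_def)
  have nT: "(t,True) \<notin> Kt t" by auto
  have QQr: "QQ (Kt t) \<omega> = restrict (QQ K1 \<omega>) (Kt t)" for \<omega>
    unfolding QQ_def using sub by (auto simp: restrict_def fun_eq_iff)
  have QT: "QQ K1 \<omega> (t,True) = X t True \<omega>" for \<omega> by (simp add: QQ_def K1_def)
  have trS: "traj (Suc t) \<omega> = mstep (D t (QQ K1 \<omega>)) (QQ K1 \<omega> (t,True)) (X t False \<omega>)" for \<omega>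
    using traj_QQ[OF sub, of \<omega>] QT[of \<omega>] by (simp add: traj_def)
  define g1 where "g1 x w = G (restrict x (Kt t)) * f (mstep (D t x) (x (t,True)) w)" for x w
  have g1m: "(\<lambda>(x,w). g1 x w) \<in> borel_measurable (PiM K1 (\<lambda>_. borel) \<Otimes>\<^sub>M borel)"
  proof -
    have "(\<lambda>p. (\<lambda>d p. G (restrict (fst p) (Kt t)) * f (mstep d (fst p (t,True)) (snd p))) (D t (fst p)) p)
        \<in> borel_measurable (PiM K1 (\<lambda>_. borel) \<Otimes>\<^sub>M borel)"
    proof (rule measurable_compose_countable'[where f="\<lambda>d p. G (restrict (fst p) (Kt t)) * f (mstep d (fst p (t,True)) (snd p))" and g="\<lambda>p. D t (fst p)", OF _ _ countable_Sn])
      fix d assume d: "d \<in> Sn"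
      have m1: "(\<lambda>p. G (restrict (fst p) (Kt t))) \<in> borel_measurable (PiM K1 (\<lambda>_. borel) \<Otimes>\<^sub>M borel)"
        using measurable_comp[OF measurable_comp[OF measurable_fst measurable_restrict_subset[OF sub]] G]
        by (simp add: comp_def)
      have "(\<lambda>x. f (mstep d (fst x) (snd x))) \<circ> (\<lambda>p. (fst p (t,True), snd p)) \<in> borel_measurable (PiM K1 (\<lambda>_. borel) \<Otimes>\<^sub>M borel)"
        by (rule measurable_comp[OF _ fm2[OF d]]) (auto simp: K1_def)
      then have m2: "(\<lambda>p. f (mstep d (fst p (t,True)) (snd p))) \<in> borel_measurable (PiM K1 (\<lambda>_. borel) \<Otimes>\<^sub>M borel)"
        by (simp add: comp_def)
      show "(\<lambda>p. G (restrict (fst p) (Kt t)) * f (mstep d (fst p (t,True)) (snd p))) \<in> borel_measurable (PiM K1 (\<lambda>_. borel) \<Otimes>\<^sub>M borel)"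
        using m1 m2 by (rule borel_measurable_times_ennreal)
    next
      show "(\<lambda>p. D t (fst p)) \<in> measurable (PiM K1 (\<lambda>_. borel) \<Otimes>\<^sub>M borel) (count_space Sn)"
        using measurable_comp[OF measurable_fst D_meas[OF sub]] by (simp add: comp_def)
    qed
    then show ?thesis by (simp add: g1_def case_prod_beta')
  qed
  define g2 where "g2 x u = G x * (\<integral>\<^sup>+w. f (mstep (D t x) u w) \<partial>U)" for x u
  have g2m: "(\<lambda>(x,u). g2 x u) \<in> borel_measurable (PiM (Kt t) (\<lambda>_. borel) \<Otimes>\<^sub>M borel)"
  proof -
    have "(\<lambda>p. (\<lambda>d p. G (fst p) * (\<integral>\<^sup>+w. f (mstep d (snd p) w) \<partial>U)) (D t (fst p)) p)
        \<in> borel_measurable (PiM (Kt t) (\<lambda>_. borel) \<Otimes>\<^sub>M borel)"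
    proof (rule measurable_compose_countable'[where f="\<lambda>d p. G (fst p) * (\<integral>\<^sup>+w. f (mstep d (snd p) w) \<partial>U)" and g="\<lambda>p. D t (fst p)", OF _ _ countable_Sn])
      fix d assume d: "d \<in> Sn"
      have m2: "(\<lambda>p. \<integral>\<^sup>+w. f (mstep d (snd p) w) \<partial>U) \<in> borel_measurable (PiM (Kt t) (\<lambda>_. borel) \<Otimes>\<^sub>M borel)"
        using measurable_comp[OF measurable_snd int_meas[OF d, of f]] by (simp add: comp_def)
      show "(\<lambda>p. G (fst p) * (\<integral>\<^sup>+w. f (mstep d (snd p) w) \<partial>U)) \<in> borel_measurable (PiM (Kt t) (\<lambda>_. borel) \<Otimes>\<^sub>M borel)"
        using measurable_comp[OF measurable_fst G] m2 by (intro borel_measurable_times_ennreal) (simp_all add: comp_def)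
    next
      show "(\<lambda>p. D t (fst p)) \<in> measurable (PiM (Kt t) (\<lambda>_. borel) \<Otimes>\<^sub>M borel) (count_space Sn)"
        using measurable_comp[OF measurable_fst D_meas[of t "Kt t"]] by (simp add: comp_def)
    qed
    then show ?thesis by (simp add: g2_def case_prod_beta')
  qed
  have "(\<integral>\<^sup>+\<omega>. G (QQ (Kt t) \<omega>) * f (traj (Suc t) \<omega>) \<partial>M) = (\<integral>\<^sup>+\<omega>. g1 (QQ K1 \<omega>) (X t False \<omega>) \<partial>M)"
    using trS QQr by (simp add: g1_def)
  also have "\<dots> = (\<integral>\<^sup>+\<omega>. \<integral>\<^sup>+w. g1 (QQ K1 \<omega>) w \<partial>U \<partial>M)"
    by (rule L1[OF nF g1m])
  also have "\<dots> = (\<integral>\<^sup>+\<omega>. g2 (QQ (Kt t) \<omega>) (X t True \<omega>) \<partial>M)"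
  proof (rule nn_integral_cong)
    fix \<omega>
    have "(\<integral>\<^sup>+w. g1 (QQ K1 \<omega>) w \<partial>U) = (\<integral>\<^sup>+w. G (QQ (Kt t) \<omega>) * f (mstep (traj t \<omega>) (X t True \<omega>) w) \<partial>U)"
      unfolding g1_def using QQr[of \<omega>] QT[of \<omega>] traj_QQ[OF sub, of \<omega>] by simp
    also have "\<dots> = G (QQ (Kt t) \<omega>) * (\<integral>\<^sup>+w. f (mstep (traj t \<omega>) (X t True \<omega>) w) \<partial>U)"
      by (rule nn_integral_cmult) (rule fm1U[OF traj_Sn])
    also have "\<dots> = g2 (QQ (Kt t) \<omega>) (X t True \<omega>)"
      unfolding g2_def using traj_QQ[of t "Kt t" \<omega>] by simp
    finally show "(\<integral>\<^sup>+w. g1 (QQ K1 \<omega>) w \<partial>U) = g2 (QQ (Kt t) \<omega>) (X t True \<omega>)" .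
  qed
  also have "\<dots> = (\<integral>\<^sup>+\<omega>. \<integral>\<^sup>+u. g2 (QQ (Kt t) \<omega>) u \<partial>U \<partial>M)"
    by (rule L1[OF nT g2m])
  also have "\<dots> = (\<integral>\<^sup>+\<omega>. G (QQ (Kt t) \<omega>) * Pop f (traj t \<omega>) \<partial>M)"
  proof (rule nn_integral_cong)
    fix \<omega>
    have dS: "D t (QQ (Kt t) \<omega>) \<in> Sn" by (rule D_Sn)
    have "(\<integral>\<^sup>+u. g2 (QQ (Kt t) \<omega>) u \<partial>U) = G (QQ (Kt t) \<omega>) * (\<integral>\<^sup>+u. \<integral>\<^sup>+w. f (mstep (D t (QQ (Kt t) \<omega>)) u w) \<partial>U \<partial>U)"
      unfolding g2_def by (rule nn_integral_cmult) (subst measurable_cong_sets[OF sU refl], rule int_meas[OF dS])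
    also have "\<dots> = G (QQ (Kt t) \<omega>) * Pop f (traj t \<omega>)"
      using traj_QQ[of t "Kt t" \<omega>] by (simp add: Pop_eq)
    finally show "(\<integral>\<^sup>+u. g2 (QQ (Kt t) \<omega>) u \<partial>U) = G (QQ (Kt t) \<omega>) * Pop f (traj t \<omega>)" .
  qed
  finally show ?thesis .
qed


lemma traj_meas: "traj t \<in> measurable M (count_space Sn)"
proof -
  have "D t \<circ> QQ (Kt t) \<in> measurable M (count_space Sn)"
    by (rule measurable_comp[OF QQ_meas D_meas]) simp
  moreover have "D t \<circ> QQ (Kt t) = traj t" using traj_QQ[of t "Kt t"] by (auto simp: fun_eq_iff)
  ultimately show ?thesis by simp
qed

lemma traj_fun_meas: "(\<lambda>\<omega>. \<phi> (traj t \<omega>) :: ennreal) \<in> borel_measurable M"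
  using measurable_comp[OF traj_meas fun_Sn_meas[of \<phi>]] by (simp add: comp_def)

lemma traj_pred: "{\<omega> \<in> space M. P (traj t \<omega>)} \<in> sets M"
proof -
  have "{\<omega> \<in> space M. P (traj t \<omega>)} = traj t -` {d \<in> Sn. P d} \<inter> space M"
    using traj_Sn by auto
  also have "\<dots> \<in> sets M" by (rule measurable_sets[OF traj_meas]) auto
  finally show ?thesis .
qed

lemma D_pred: "Kt s \<subseteq> K \<Longrightarrow> {Q \<in> space (PiM K (\<lambda>_. borel)). P (D s Q)} \<in> sets (PiM K (\<lambda>_. borel))"
proof -
  assume sub: "Kt s \<subseteq> K"
  have "{Q \<in> space (PiM K (\<lambda>_. borel)). P (D s Q)} = D s -` {d \<in> Sn. P d} \<inter> space (PiM K (\<lambda>_. borel))"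
    using D_Sn by auto
  also have "\<dots> \<in> sets (PiM K (\<lambda>_. borel))" by (rule measurable_sets[OF D_meas[OF sub]]) auto
  finally show ?thesis .
qed

lemma ville_t:
  fixes F :: "(nat \<Rightarrow> nat) \<Rightarrow> real"
  assumes F0: "\<And>d. 0 \<le> F d" and sup: "\<And>d. d \<in> Sn \<Longrightarrow> Pop (\<lambda>d. ennreal (F d)) d \<le> ennreal (F d)"
    and c: "c > 0"
  shows "emeasure M {\<omega>\<in>space M. \<exists>s\<le>t. c \<le> F (traj s \<omega>)} \<le> ennreal (F (\<lambda>_. 0) / c)"
proof -
  define S where "S t = {Q. \<exists>s\<le>t. c \<le> F (D s Q)}" for t
  define Z where "Z t \<omega> = (if \<exists>s\<le>t. c \<le> F (traj s \<omega>) then ennreal c else ennreal (F (traj t \<omega>)))" for t \<omega>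
  have stQ: "(\<exists>s\<le>t. c \<le> F (traj s \<omega>)) \<longleftrightarrow> QQ (Kt t) \<omega> \<in> S t" for t \<omega>
  proof -
    have "traj s \<omega> = D s (QQ (Kt t) \<omega>)" if "s \<le> t" for s
      using that by (intro traj_QQ) auto
    then show ?thesis unfolding S_def by auto
  qed
  have Smeas: "{Q \<in> space (PiM (Kt t) (\<lambda>_. borel)). Q \<in> S t} \<in> sets (PiM (Kt t) (\<lambda>_. borel))" for t
  proof -
    have "{Q \<in> space (PiM (Kt t) (\<lambda>_. borel)). Q \<in> S t} = (\<Union>s\<in>{..t}. {Q \<in> space (PiM (Kt t) (\<lambda>_. borel)). c \<le> F (D s Q)})"
      unfolding S_def by auto
    also have "\<dots> \<in> sets (PiM (Kt t) (\<lambda>_. borel))"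
      by (intro sets.finite_UN D_pred) auto
    finally show ?thesis .
  qed
  have Sind: "(\<lambda>\<omega>. indicator (S t) (QQ (Kt t) \<omega>) :: ennreal) \<in> borel_measurable M" for t
    using measurable_comp[OF QQ_meas borel_measurable_indicator'[OF Smeas]] by (simp add: comp_def)
  have Zmeas: "Z t \<in> borel_measurable M" for t
  proof -
    have "Z t = (\<lambda>\<omega>. ennreal c * indicator (S t) (QQ (Kt t) \<omega>) + (1 - indicator (S t) (QQ (Kt t) \<omega>)) * ennreal (F (traj t \<omega>)))"
    proof
      fix \<omega> show "Z t \<omega> = ennreal c * indicator (S t) (QQ (Kt t) \<omega>) + (1 - indicator (S t) (QQ (Kt t) \<omega>)) * ennreal (F (traj t \<omega>))"
        using stQ[of t \<omega>] by (cases "QQ (Kt t) \<omega> \<in> S t") (auto simp add: Z_def)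
    qed
    moreover have "\<dots> \<in> borel_measurable M"
      by (intro borel_measurable_add borel_measurable_times_ennreal borel_measurable_const Sind traj_fun_meas
          borel_measurable_minus_ennreal)
    ultimately show ?thesis by simp
  qed
  have Zle: "(\<integral>\<^sup>+\<omega>. Z t \<omega> \<partial>M) \<le> ennreal (F (\<lambda>_. 0))" for t
  proof (induction t)
    case 0
    have "(\<integral>\<^sup>+\<omega>. Z 0 \<omega> \<partial>M) \<le> (\<integral>\<^sup>+\<omega>. ennreal (F (\<lambda>_. 0)) \<partial>M)"
      by (intro nn_integral_mono) (auto simp: Z_def traj_def intro: ennreal_leI)
    also have "\<dots> = ennreal (F (\<lambda>_. 0))" by (simp add: emeasure_space_1)
    finally show ?case .
  next
    case (Suc t)
    define G where "G Q = (1 - indicator (S t) Q :: ennreal)" for Q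
    have Gm: "G \<in> borel_measurable (PiM (Kt t) (\<lambda>_. borel))"
      unfolding G_def by (intro borel_measurable_minus_ennreal borel_measurable_const borel_measurable_indicator'[OF Smeas])
    define H where "H \<omega> = ennreal c * indicator (S t) (QQ (Kt t) \<omega>)" for \<omega>
    have Hm: "H \<in> borel_measurable M" unfolding H_def by (intro borel_measurable_times_ennreal borel_measurable_const Sind)
    have GQm: "(\<lambda>\<omega>. G (QQ (Kt t) \<omega>)) \<in> borel_measurable M"
      using measurable_comp[OF QQ_meas Gm] by (simp add: comp_def)
    have "(\<integral>\<^sup>+\<omega>. Z (Suc t) \<omega> \<partial>M) \<le> (\<integral>\<^sup>+\<omega>. H \<omega> + G (QQ (Kt t) \<omega>) * ennreal (F (traj (Suc t) \<omega>)) \<partial>M)"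
    proof (intro nn_integral_mono)
      fix \<omega>
      show "Z (Suc t) \<omega> \<le> H \<omega> + G (QQ (Kt t) \<omega>) * ennreal (F (traj (Suc t) \<omega>))"
      proof (cases "QQ (Kt t) \<omega> \<in> S t")
        case True
        then have "\<exists>s\<le>Suc t. c \<le> F (traj s \<omega>)" using stQ[of t \<omega>] le_SucI by blast
        then show ?thesis using True by (simp add: Z_def H_def G_def)
      next
        case False
        then have ns: "\<not> (\<exists>s\<le>t. c \<le> F (traj s \<omega>))" using stQ[of t \<omega>] by auto
        have "Z (Suc t) \<omega> \<le> ennreal (F (traj (Suc t) \<omega>))"
        proof (cases "\<exists>s\<le>Suc t. c \<le> F (traj s \<omega>)")
          case True
          then have "c \<le> F (traj (Suc t) \<omega>)" using ns le_Suc_eq by auto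
          then show ?thesis using True by (simp add: Z_def ennreal_leI)
        qed (auto simp add: Z_def)
        then show ?thesis using False by (simp add: H_def G_def)
      qed
    qed
    also have "\<dots> = (\<integral>\<^sup>+\<omega>. H \<omega> \<partial>M) + (\<integral>\<^sup>+\<omega>. G (QQ (Kt t) \<omega>) * ennreal (F (traj (Suc t) \<omega>)) \<partial>M)"
      by (rule nn_integral_add) (auto intro!: Hm borel_measurable_times_ennreal GQm traj_fun_meas)
    finally have s1: "(\<integral>\<^sup>+\<omega>. Z (Suc t) \<omega> \<partial>M) \<le> (\<integral>\<^sup>+\<omega>. H \<omega> \<partial>M) + (\<integral>\<^sup>+\<omega>. G (QQ (Kt t) \<omega>) * ennreal (F (traj (Suc t) \<omega>)) \<partial>M)" .
    have s2: "(\<integral>\<^sup>+\<omega>. G (QQ (Kt t) \<omega>) * ennreal (F (traj (Suc t) \<omega>)) \<partial>M) =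
               (\<integral>\<^sup>+\<omega>. G (QQ (Kt t) \<omega>) * Pop (\<lambda>d. ennreal (F d)) (traj t \<omega>) \<partial>M)"
      by (rule L2[OF Gm])
    have s3: "(\<integral>\<^sup>+\<omega>. G (QQ (Kt t) \<omega>) * Pop (\<lambda>d. ennreal (F d)) (traj t \<omega>) \<partial>M) \<le> (\<integral>\<^sup>+\<omega>. G (QQ (Kt t) \<omega>) * ennreal (F (traj t \<omega>)) \<partial>M)"
      by (intro nn_integral_mono mult_left_mono sup traj_Sn) simp
    have s4: "(\<integral>\<^sup>+\<omega>. H \<omega> \<partial>M) + (\<integral>\<^sup>+\<omega>. G (QQ (Kt t) \<omega>) * ennreal (F (traj t \<omega>)) \<partial>M) = (\<integral>\<^sup>+\<omega>. H \<omega> + G (QQ (Kt t) \<omega>) * ennreal (F (traj t \<omega>)) \<partial>M)"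
      by (rule nn_integral_add[symmetric]) (auto intro!: Hm borel_measurable_times_ennreal GQm traj_fun_meas)
    have s5: "(\<integral>\<^sup>+\<omega>. H \<omega> + G (QQ (Kt t) \<omega>) * ennreal (F (traj t \<omega>)) \<partial>M) = (\<integral>\<^sup>+\<omega>. Z t \<omega> \<partial>M)"
    proof (intro nn_integral_cong)
      fix \<omega> show "H \<omega> + G (QQ (Kt t) \<omega>) * ennreal (F (traj t \<omega>)) = Z t \<omega>"
        using stQ[of t \<omega>] by (cases "QQ (Kt t) \<omega> \<in> S t") (auto simp add: H_def G_def Z_def)
    qed
    have "(\<integral>\<^sup>+\<omega>. Z (Suc t) \<omega> \<partial>M) \<le> (\<integral>\<^sup>+\<omega>. H \<omega> \<partial>M) + (\<integral>\<^sup>+\<omega>. G (QQ (Kt t) \<omega>) * ennreal (F (traj (Suc t) \<omega>)) \<partial>M)"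
      by (rule s1)
    also have "\<dots> = (\<integral>\<^sup>+\<omega>. H \<omega> \<partial>M) + (\<integral>\<^sup>+\<omega>. G (QQ (Kt t) \<omega>) * Pop (\<lambda>d. ennreal (F d)) (traj t \<omega>) \<partial>M)"
      by (simp only: s2)
    also have "\<dots> \<le> (\<integral>\<^sup>+\<omega>. H \<omega> \<partial>M) + (\<integral>\<^sup>+\<omega>. G (QQ (Kt t) \<omega>) * ennreal (F (traj t \<omega>)) \<partial>M)"
      by (rule add_left_mono[OF s3])
    also have "\<dots> = (\<integral>\<^sup>+\<omega>. Z t \<omega> \<partial>M)"
      by (simp only: s4 s5)
    finally have "(\<integral>\<^sup>+\<omega>. Z (Suc t) \<omega> \<partial>M) \<le> (\<integral>\<^sup>+\<omega>. Z t \<omega> \<partial>M)" .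
    then show ?case using Suc.IH by (rule order_trans)
  qed
  let ?A = "{\<omega>\<in>space M. \<exists>s\<le>t. c \<le> F (traj s \<omega>)}"
  have Am: "?A \<in> sets M"
  proof -
    have "?A = (\<Union>s\<in>{..t}. {\<omega>\<in>space M. c \<le> F (traj s \<omega>)})" by auto
    also have "\<dots> \<in> sets M" by (intro sets.finite_UN traj_pred) auto
    finally show ?thesis .
  qed
  have "ennreal c * emeasure M ?A = (\<integral>\<^sup>+\<omega>. ennreal c * indicator ?A \<omega> \<partial>M)"
    by (rule nn_integral_cmult_indicator[OF Am, symmetric])
  also have "\<dots> \<le> (\<integral>\<^sup>+\<omega>. Z t \<omega> \<partial>M)"
  proof (intro nn_integral_mono)
    fix \<omega> show "ennreal c * indicator ?A \<omega> \<le> Z t \<omega>"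
      by (cases "\<omega> \<in> ?A") (auto simp: Z_def)
  qed
  also have "\<dots> \<le> ennreal (F (\<lambda>_. 0))" by (rule Zle)
  finally have le1: "ennreal c * emeasure M ?A \<le> ennreal (F (\<lambda>_. 0))" .
  have "ennreal c * emeasure M ?A = ennreal (c * prob ?A)"
    using c by (simp only: emeasure_eq_measure ennreal_mult' measure_nonneg)
  with le1 have "ennreal (c * prob ?A) \<le> ennreal (F (\<lambda>_. 0))" by simp
  then have "c * prob ?A \<le> F (\<lambda>_. 0)" using F0 by (simp add: ennreal_le_iff)
  then have "prob ?A \<le> F (\<lambda>_. 0) / c" using c by (simp add: pos_le_divide_eq mult.commute)
  then show ?thesis by (simp add: emeasure_eq_measure ennreal_leI)
qed


lemma measure_zero_eps:
  assumes "\<And>e::real. 0 < e \<Longrightarrow> emeasure M B \<le> ennreal e"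
  shows "emeasure M B = 0"
proof -
  have "emeasure M B \<le> 0 + 0"
  proof (rule ennreal_le_epsilon)
    fix e :: real assume "0 < e" then show "emeasure M B \<le> 0 + 0 + ennreal e" using assms by simp
  qed
  then show ?thesis by simp
qed

lemma ville:
  fixes F :: "(nat \<Rightarrow> nat) \<Rightarrow> real"
  assumes F0: "\<And>d. 0 \<le> F d" and sup: "\<And>d. d \<in> Sn \<Longrightarrow> Pop (\<lambda>d. ennreal (F d)) d \<le> ennreal (F d)"
    and c: "c > 0"
  shows "emeasure M {\<omega>\<in>space M. \<exists>t. c \<le> F (traj t \<omega>)} \<le> ennreal (F (\<lambda>_. 0) / c)"
proof -
  define A where "A t = {\<omega>\<in>space M. \<exists>s\<le>t. c \<le> F (traj s \<omega>)}" for t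
  have Am: "A t \<in> sets M" for t
  proof -
    have "A t = (\<Union>s\<in>{..t}. {\<omega>\<in>space M. c \<le> F (traj s \<omega>)})" unfolding A_def by auto
    also have "\<dots> \<in> sets M" by (intro sets.finite_UN traj_pred) auto
    finally show ?thesis .
  qed
  have inc: "incseq A" unfolding incseq_def A_def using order_trans by blast
  have U: "{\<omega>\<in>space M. \<exists>t. c \<le> F (traj t \<omega>)} = (\<Union>t. A t)" unfolding A_def by auto
  have "emeasure M (\<Union>t. A t) = (SUP t. emeasure M (A t))"
    by (rule SUP_emeasure_incseq[symmetric]) (use Am inc in auto)
  also have "\<dots> \<le> ennreal (F (\<lambda>_. 0) / c)"
    by (rule SUP_least) (unfold A_def, rule ville_t[OF F0 sup c])
  finally show ?thesis unfolding U .
qed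

lemma ville_AE:
  fixes F :: "(nat \<Rightarrow> nat) \<Rightarrow> real"
  assumes F0: "\<And>d. 0 \<le> F d" and sup: "\<And>d. d \<in> Sn \<Longrightarrow> Pop (\<lambda>d. ennreal (F d)) d \<le> ennreal (F d)"
  shows "AE \<omega> in M. \<exists>C. \<forall>t. F (traj t \<omega>) < C"
proof (rule AE_I')
  let ?B = "{\<omega>\<in>space M. \<forall>k::nat. \<exists>t. real k \<le> F (traj t \<omega>)}"
  have Bm: "?B \<in> sets M"
    by (intro sets.sets_Collect_countable_All sets.sets_Collect_countable_Ex traj_pred)
  have "emeasure M ?B = 0"
  proof (rule measure_zero_eps)
    fix e :: real assume e: "0 < e"
    obtain k :: nat where k: "F (\<lambda>_. 0) / e + 1 < real k" using reals_Archimedean2 by blast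
    have kpos: "real k > 0" using k F0[of "\<lambda>_. 0"] e
      by (smt (verit) divide_nonneg_pos)
    have "emeasure M ?B \<le> emeasure M {\<omega>\<in>space M. \<exists>t. real k \<le> F (traj t \<omega>)}"
      by (rule emeasure_mono) (auto intro: traj_pred sets.sets_Collect_countable_Ex)
    also have "\<dots> \<le> ennreal (F (\<lambda>_. 0) / real k)" by (rule ville[OF F0 sup kpos])
    also have "\<dots> \<le> ennreal e"
    proof (rule ennreal_leI)
      have "F (\<lambda>_. 0) \<le> e * real k" using k e by (simp add: field_simps) 
      then show "F (\<lambda>_. 0) / real k \<le> e" using kpos by (simp add: divide_le_eq)
    qed
    finally show "emeasure M ?B \<le> ennreal e" .
  qed
  then show "?B \<in> null_sets M" using Bm by auto
  show "{\<omega> \<in> space M. \<not> (\<exists>C. \<forall>t. F (traj t \<omega>) < C)} \<subseteq> ?B"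
    by (auto simp: not_less)
qed


lemma purchases_N: "AE \<omega> in M. \<exists>t. N < tot (traj t \<omega>)"
proof (rule AE_I')
  let ?B = "{\<omega>\<in>space M. \<forall>t. tot (traj t \<omega>) \<le> N}"
  have Bm: "?B \<in> sets M" by (intro sets.sets_Collect_countable_All traj_pred)
  define \<mu> where "\<mu> = 2 / (2 - rho N)"
  define Fn where "Fn = (\<lambda>t d. (if tot d \<le> N then (1/2::real) ^ (tot d) else 0) * \<mu> ^ t)"
  have mu1: "\<mu> > 1" unfolding \<mu>_def using rho_pos[of N] rho_le1[of N] by (simp add: field_simps)
  have E: "(\<integral>\<^sup>+\<omega>. ennreal (Fn t (traj t \<omega>)) \<partial>M) \<le> 1" for t
  proof (induction t)
    case 0
    have "traj 0 \<omega> = (\<lambda>_. 0)" for \<omega> by (simp add: traj_def)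
    then have "(\<lambda>\<omega>. ennreal (Fn 0 (traj 0 \<omega>))) = (\<lambda>_. 1)" by (simp add: Fn_def tot_def)
    then show ?case by (simp add: emeasure_space_1)
  next
    case (Suc t)
    have "(\<integral>\<^sup>+\<omega>. ennreal (Fn (Suc t) (traj (Suc t) \<omega>)) \<partial>M) =
          (\<integral>\<^sup>+\<omega>. (\<lambda>_. 1) (QQ (Kt t) \<omega>) * ennreal (Fn (Suc t) (traj (Suc t) \<omega>)) \<partial>M)" by simp
    also have "\<dots> = (\<integral>\<^sup>+\<omega>. (\<lambda>_. 1) (QQ (Kt t) \<omega>) * Pop (\<lambda>d. ennreal (Fn (Suc t) d)) (traj t \<omega>) \<partial>M)"
      by (rule L2) simp
    also have "\<dots> \<le> (\<integral>\<^sup>+\<omega>. ennreal (Fn t (traj t \<omega>)) \<partial>M)"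
    proof (intro nn_integral_mono)
      fix \<omega>
      show "(\<lambda>_. 1) (QQ (Kt t) \<omega>) * Pop (\<lambda>d. ennreal (Fn (Suc t) d)) (traj t \<omega>) \<le> ennreal (Fn t (traj t \<omega>))"
        unfolding Fn_def \<mu>_def using purchase_step[of N t "traj t \<omega>"] by simp
    qed
    finally show ?case using Suc.IH by (rule order_trans)
  qed
  have "emeasure M ?B = 0"
  proof (rule measure_zero_eps)
    fix e :: real assume e: "0 < e"
    obtain t where t: "2 ^ N / e < \<mu> ^ t" using real_arch_pow[OF mu1] by blast
    define c where "c = (1/2::real) ^ N * \<mu> ^ t"
    have cpos: "c > 0" unfolding c_def using mu1 by simp
    have "ennreal c * emeasure M ?B = (\<integral>\<^sup>+\<omega>. ennreal c * indicator ?B \<omega> \<partial>M)"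
      by (rule nn_integral_cmult_indicator[OF Bm, symmetric])
    also have "\<dots> \<le> (\<integral>\<^sup>+\<omega>. ennreal (Fn t (traj t \<omega>)) \<partial>M)"
    proof (intro nn_integral_mono)
      fix \<omega> assume \<omega>: "\<omega> \<in> space M"
      show "ennreal c * indicator ?B \<omega> \<le> ennreal (Fn t (traj t \<omega>))"
      proof (cases "\<omega> \<in> ?B")
        case True
        then have tt: "tot (traj t \<omega>) \<le> N" by auto
        have "(1/2::real) ^ N \<le> (1/2) ^ (tot (traj t \<omega>))" using tt by (intro power_decreasing) auto
        then have "c \<le> Fn t (traj t \<omega>)" unfolding c_def Fn_def using tt mu1 by simp
        then show ?thesis using True by (simp add: ennreal_leI)
      qed simp
    qed
    also have "\<dots> \<le> 1" by (rule E)
    finally have le1: "ennreal c * emeasure M ?B \<le> 1" .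
    have "ennreal c * emeasure M ?B = ennreal (c * prob ?B)"
      using cpos by (simp only: emeasure_eq_measure ennreal_mult' measure_nonneg)
    with le1 have "ennreal (c * prob ?B) \<le> ennreal 1" by simp
    then have "c * prob ?B \<le> 1" by (subst (asm) ennreal_le_iff) auto
    then have "prob ?B \<le> 1 / c" using cpos by (simp add: pos_le_divide_eq mult.commute)
    also have "1 / c = 2 ^ N / \<mu> ^ t" unfolding c_def by (simp add: field_simps)
    also have "\<dots> < e" using t e mu1 by (simp add: divide_less_eq mult.commute)
    finally show "emeasure M ?B \<le> ennreal e" by (simp add: emeasure_eq_measure ennreal_leI)
  qed
  then show "?B \<in> null_sets M" using Bm by auto
  show "{\<omega> \<in> space M. \<not> (\<exists>t. N < tot (traj t \<omega>))} \<subseteq> ?B" by (auto simp: not_less)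
qed

lemma purchases_inf: "AE \<omega> in M. \<forall>N. \<exists>t. N < tot (traj t \<omega>)"
  using purchases_N by (simp add: AE_all_countable)

end



context mkt
begin

lemma traj_mono: "traj t \<omega> j \<le> traj (Suc t) \<omega> j"
proof -
  have "traj (Suc t) \<omega> = mstep (traj t \<omega>) (X t True \<omega>) (X t False \<omega>)" by (simp add: traj_def)
  then show ?thesis by (simp add: mstep_eq)
qed

lemma main_AE: "AE \<omega> in M. (\<lambda>t. market_share n (traj t \<omega>) 1) \<longlonglongrightarrow> 1"
proof -
  have AE2: "AE \<omega> in M. \<forall>i\<in>{2..n}. \<exists>C. \<forall>t. YY i (traj t \<omega>) < C"
  proof (subst AE_ball_countable)
    show "countable {2..n}" by simp
    show "\<forall>i\<in>{2..n}. AE \<omega> in M. \<exists>C. \<forall>t. YY i (traj t \<omega>) < C"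
      using ville_AE[OF YY_nonneg YY_super] by blast
  qed
  show ?thesis
    using purchases_inf AE2
  proof eventually_elim
    case (elim \<omega>)
    show ?case
      by (rule deterministic[where dd="\<lambda>t. traj t \<omega>"]) (use elim traj_mono in auto)
  qed
qed

end

theorem mainTheorem7:
  fixes M :: "'a measure" and X :: "nat \<Rightarrow> bool \<Rightarrow> 'a \<Rightarrow> real"
    and n :: nat and v A q :: "nat \<Rightarrow> real"
  assumes "prob_space M"
    and indep: "prob_space.indep_vars M (\<lambda>_. borel) (\<lambda>(t, b). X t b) UNIV"
    and unif: "\<And>t b. distr M borel (X t b) = uniform_measure lborel {0..1::real}"
    and n2: "n \<ge> 2"
    and v_mono: "\<And>i j. 1 \<le> i \<Longrightarrow> i \<le> j \<Longrightarrow> j \<le> n \<Longrightarrow> v j \<le> v i"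
    and v_pos: "v n > 0"
    and A_pos: "\<And>i. 1 \<le> i \<Longrightarrow> i \<le> n \<Longrightarrow> A i > 0"
    and q1: "q 1 \<le> 1"
    and q_strict: "\<And>i j. 1 \<le> i \<Longrightarrow> i < j \<Longrightarrow> j \<le> n \<Longrightarrow> q j < q i"
    and qn: "q n \<ge> 0"
  shows "AE \<omega> in M.
           (\<lambda>t. market_share n (market_traj n v A q (\<lambda>s b. X s b \<omega>) t) 1) \<longlonglongrightarrow> 1"
proof -
  interpret mkt n v A q M X
    by (intro mkt.intro mparams.intro mkt_axioms.intro) (fact assms)+
  show ?thesis using main_AE unfolding traj_def .
qed

end
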